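(* Let $\xi$ be a highest $\ell_{\mathbf s}$-weight vector of highest $\ell_{\mathbf s}$-weight $\boldsymbol\lambda(u)=(\lambda_i(u))_{1\le i\le\kappa}$ in a representation of the super Yangian $\mathscr Y_{\mathbf s}$. Then for each $1\le i\le\kappa$, $$t'_{ii}(u)\,\xi=\lambda_i'(u)\,\xi,\qquad \lambda_i'(u)=\frac{1}{\lambda_{i}(u+\rho_{i+1})}\prod_{k=i+1}^{\kappa} \frac{\lambda_k(u+\rho_k)}{\lambda_{k}(u+\rho_{k+1})}.$$
   Context: Fix integers $m,n\ge 0$ and put $\kappa=m+n$. A parity sequence is $\mathbf s=(s_1,\dots,s_\kappa)\in\{\pm1\}^\kappa$ with exactly $m$ entries equal to $1$; write $|i|\in\mathbb Z_2$ with $s_i=(-1)^{|i|}$. Let $V=\mathbb C^{m|n}$ have basis $v_1,\dots,v_\kappa$ with $v_i$ of parity $|i|$, and let $E_{ij}\in\mathrm{End}(V)$ be the matrix units. The super Yangian $\mathscr Y_{\mathbf s}$ is the unital associative superalgebra generated by $t_{ij}^{(r)}$ ($1\le i,j\le\kappa$, $r\ge1$) of parity $|i|+|j|$ with defining relations $[t_{ij}(u),t_{kl}(v)]=\frac{(-1)^{|i||j|+|i||k|+|j||k|}}{u-v}\big(t_{kj}(u)t_{il}(v)-t_{kj}(v)t_{il}(u)\big)$ (supercommutator), where $t_{ij}(u)=\delta_{ij}+\sum_{r\ge1}t_{ij}^{(r)}u^{-r}$. Put $T(u)=\sum_{i,j}(-1)^{|i||j|+|j|}t_{ij}(u)\otimes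 E_{ij}$ and define the series $t'_{ij}(u)$ by $T(u)^{-1}=\sum_{i,j}(-1)^{|i||j|+|j|}t'_{ij}(u)\otimes E_{ij}$. A nonzero vector $\xi$ in a $\mathscr Y_{\mathbf s}$-module is a highest $\ell_{\mathbf s}$-weight vector of highest $\ell_{\mathbf s}$-weight $\boldsymbol\lambda(u)$ if $t_{ij}(u)\xi=0$ for $1\le i<j\le\kappa$ and $t_{ii}(u)\xi=\lambda_i(u)\xi$ with $\lambda_i(u)\in1+u^{-1}\mathbb C[[u^{-1}]]$. Put $\rho_k=\sum_{a=k}^\kappa s_a$ for $1\le k\le\kappa$, and $\rho_{\kappa+1}=0$. *)

theory Defs
  imports Complex_Main "HOL-Computational_Algebra.Formal_Power_Series"
begin

definition par :: "(nat \<Rightarrow> int) \<Rightarrow> nat \<Rightarrow> nat" where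
  "par s i = (if s i = 1 then 0 else 1)"

definition sgnv :: "nat \<Rightarrow> 'v::ab_group_add \<Rightarrow> 'v" where
  "sgnv e x = (if even e then x else - x)"

definition parity_seq :: "nat \<Rightarrow> nat \<Rightarrow> (nat \<Rightarrow> int) \<Rightarrow> bool" where
  "parity_seq m n s \<longleftrightarrow> (\<forall>i\<in>{1..m+n}. s i = 1 \<or> s i = -1) \<and>
     card {i\<in>{1..m+n}. s i = 1} = m"

definition tt :: "(nat \<Rightarrow> nat \<Rightarrow> nat \<Rightarrow> 'v \<Rightarrow> 'v) \<Rightarrow> nat \<Rightarrow> nat \<Rightarrow> nat \<Rightarrow> 'v::zero \<Rightarrow> 'v" where
  "tt t i j r v = (if r = 0 then (if i = j then v else 0) else t i j r v)"

text \<open>A representation of the super Yangian Y_s on a complex vector space (scale = scalar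
  multiplication): linear operators t i j r (1 \<le> i,j \<le> kappa, r \<ge> 1) satisfying the defining
  relations in coefficient form
  [t_ij^(r), t_kl^(s)] = (-1)^(|i||j|+|i||k|+|j||k|) *
     sum_{a=0}^{min(r,s)-1} (t_kj^(a) t_il^(r+s-1-a) - t_kj^(r+s-1-a) t_il^(a)),
  where [x,y] = xy - (-1)^((|i|+|j|)(|k|+|l|)) yx is the supercommutator.\<close>
definition yangian_rep ::
  "nat \<Rightarrow> (nat \<Rightarrow> int) \<Rightarrow> (complex \<Rightarrow> 'v::ab_group_add \<Rightarrow> 'v)
     \<Rightarrow> (nat \<Rightarrow> nat \<Rightarrow> nat \<Rightarrow> 'v \<Rightarrow> 'v) \<Rightarrow> bool" where
  "yangian_rep \<kappa> s scale t \<longleftrightarrow>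
     Vector_Spaces.vector_space scale \<and>
     (\<forall>i\<in>{1..\<kappa>}. \<forall>j\<in>{1..\<kappa>}. \<forall>r\<ge>1. Vector_Spaces.linear scale scale (t i j r)) \<and>
     (\<forall>i\<in>{1..\<kappa>}. \<forall>j\<in>{1..\<kappa>}. \<forall>k\<in>{1..\<kappa>}. \<forall>l\<in>{1..\<kappa>}. \<forall>r\<ge>1. \<forall>q\<ge>1. \<forall>v.
        t i j r (t k l q v)
          - sgnv ((par s i + par s j) * (par s k + par s l)) (t k l q (t i j r v))
        = sgnv (par s i * par s j + par s i * par s k + par s j * par s k)
            (\<Sum>a<min r q. tt t k j a (tt t i l (r + q - 1 - a) v)
                          - tt t k j (r + q - 1 - a) (tt t i l a v)))"

text \<open>Coefficients t'_il^(r) of the inverse matrix T(u)^{-1}.  With the sign conventions of the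
  paper (super tensor product), T(u) T(u)^{-1} = 1 amounts to
  sum_j t_ij(u) t'_jl(u) = delta_il, i.e. t'(u) is the ordinary inverse of the matrix (t_ij(u)).\<close>
fun tinv :: "nat \<Rightarrow> (nat \<Rightarrow> nat \<Rightarrow> nat \<Rightarrow> 'v \<Rightarrow> 'v) \<Rightarrow> nat \<Rightarrow> nat \<Rightarrow> nat \<Rightarrow> 'v::ab_group_add \<Rightarrow> 'v" where
  "tinv \<kappa> t i l 0 v = (if i = l then v else 0)"
| "tinv \<kappa> t i l (Suc r) v =
     - (\<Sum>j\<in>{1..\<kappa>}. \<Sum>p\<in>{1..Suc r}. t i j p (tinv \<kappa> t j l (Suc r - p) v))"

text \<open>Highest l_s-weight vector of highest weight lambda; lambda i is the series lambda_i(u)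
  viewed as a formal power series in u^{-1}.\<close>
definition highest_weight_vector ::
  "nat \<Rightarrow> (complex \<Rightarrow> 'v::ab_group_add \<Rightarrow> 'v) \<Rightarrow> (nat \<Rightarrow> nat \<Rightarrow> nat \<Rightarrow> 'v \<Rightarrow> 'v)
     \<Rightarrow> (nat \<Rightarrow> complex fps) \<Rightarrow> 'v \<Rightarrow> bool" where
  "highest_weight_vector \<kappa> scale t lam xi \<longleftrightarrow>
     xi \<noteq> 0 \<and>
     (\<forall>i\<in>{1..\<kappa>}. \<forall>j\<in>{1..\<kappa>}. i < j \<longrightarrow> (\<forall>r\<ge>1. t i j r xi = 0)) \<and>
     (\<forall>i\<in>{1..\<kappa>}. fps_nth (lam i) 0 = 1 \<and> (\<forall>r\<ge>1. t i i r xi = scale (fps_nth (lam i) r) xi))"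

text \<open>Shift: for f(u) = sum_r f_r u^{-r}, the series f(u+c) expanded in u^{-1};
  in the variable x = u^{-1} this is f(x/(1+cx)).\<close>
definition fps_shift_arg :: "complex \<Rightarrow> complex fps \<Rightarrow> complex fps" where
  "fps_shift_arg c f = f oo (fps_X * inverse (1 + fps_const c * fps_X))"

definition rho :: "nat \<Rightarrow> (nat \<Rightarrow> int) \<Rightarrow> nat \<Rightarrow> int" where
  "rho \<kappa> s k = (\<Sum>a\<in>{k..\<kappa>}. s a)"

end

theory Submission
  imports Defs
begin

unbundle fps_syntax

definition Gc :: "complex \<Rightarrow> complex fps" where
  "Gc c = fps_X * inverse (1 + fps_const c * fps_X)"

definition Pc :: "complex \<Rightarrow> complex fps" where
  "Pc c = 1 + fps_const c * fps_X"

lemma Pc0: "Pc c $ 0 = 1" by (simp add: Pc_def)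

lemma Pc_inv: "inverse (Pc c) * Pc c = 1"
  by (rule inverse_mult_eq_1) (simp add: Pc0)

lemma Gc_Pc: "Gc c = fps_X * inverse (Pc c)" by (simp add: Gc_def Pc_def)

lemma Gc0[simp]: "Gc c $ 0 = 0"
  by (simp add: Gc_def)

lemma Gc_mult: "Gc c * Pc c = fps_X"
  unfolding Gc_Pc by (simp add: mult.assoc Pc_inv)

lemma Gc_diff: "Gc c - fps_X = - (fps_const c * fps_X * Gc c)"
proof -
  have "Gc c - fps_X = fps_X * inverse (Pc c) - fps_X * inverse (Pc c) * Pc c"
    by (simp add: Gc_Pc mult.assoc Pc_inv)
  also have "\<dots> = fps_X * inverse (Pc c) * (1 - Pc c)"
    by (simp add: right_diff_distrib)
  also have "1 - Pc c = - (fps_const c * fps_X)" by (simp add: Pc_def)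
  finally show ?thesis by (simp add: Gc_Pc mult.commute mult.left_commute)
qed

lemma Gc_0: "Gc 0 = fps_X" by (simp add: Gc_def)

lemma fps_shift_arg_Gc: "fps_shift_arg c f = f oo Gc c"
  by (simp add: fps_shift_arg_def Gc_def)

lemma sh0: "fps_shift_arg 0 f = f"
  by (simp add: fps_shift_arg_Gc Gc_0)

lemma sh_mult: "fps_shift_arg c (f * g) = fps_shift_arg c f * fps_shift_arg c g"
  by (simp add: fps_shift_arg_Gc fps_compose_mult_distrib)

lemma sh_prod: "fps_shift_arg c (prod f S) = (\<Prod>k\<in>S. fps_shift_arg c (f k))"
  by (simp add: fps_shift_arg_Gc fps_compose_prod_distrib)

lemma sh_inverse: "f $ 0 \<noteq> 0 \<Longrightarrow> fps_shift_arg c (inverse f) = inverse (fps_shift_arg c f)"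
  by (simp add: fps_shift_arg_Gc fps_inverse_compose)

lemma sh_nth0[simp]: "fps_shift_arg c f $ 0 = f $ 0"
  by (simp add: fps_shift_arg_Gc)

lemma Pc_comp: "Pc d oo Gc c = 1 + fps_const d * Gc c"
  by (simp add: Pc_def fps_compose_add_distrib fps_compose_mult_distrib)

lemma Gc_comp: "Gc d oo Gc c = Gc (c + d)"
proof -
  have a: "(1 + fps_const d * Gc c) $ 0 = 1" by simp
  have "Gc d oo Gc c = (fps_X oo Gc c) * (inverse (Pc d) oo Gc c)"
    unfolding Gc_Pc by (rule fps_compose_mult_distrib) simp
  also have "\<dots> = Gc c * inverse (1 + fps_const d * Gc c)"
    by (simp add: fps_inverse_compose Pc0 Pc_comp)
  finally have 1: "Gc d oo Gc c = Gc c * inverse (1 + fps_const d * Gc c)" .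
  have 2: "Gc c * Pc (c+d) = fps_X * (1 + fps_const d * Gc c)"
  proof -
    have "fps_const (c+d) = fps_const c + fps_const d" by simp
    hence "Pc (c+d) = Pc c + fps_const d * fps_X" unfolding Pc_def by (simp only: distrib_right add.assoc)
    hence "Gc c * Pc (c+d) = Gc c * Pc c + fps_const d * fps_X * Gc c"
      by (simp add: distrib_left mult.commute)
    thus ?thesis by (simp add: Gc_mult distrib_left mult.assoc mult.left_commute)
  qed
  have "Gc c * inverse (1 + fps_const d * Gc c)
      = Gc c * Pc (c+d) * inverse (Pc (c+d)) * inverse (1 + fps_const d * Gc c)"
    by (simp add: mult.assoc mult.commute[of "Pc (c+d)"] Pc_inv)
  also have "\<dots> = fps_X * inverse (Pc (c+d)) * ((1 + fps_const d * Gc c) * inverse (1 + fps_const d * Gc c))"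
    unfolding 2 by (simp only: mult.assoc mult.commute[of "inverse (Pc (c+d))"])
  also have "(1 + fps_const d * Gc c) * inverse (1 + fps_const d * Gc c) = 1"
    by (rule inverse_mult_eq_1'[OF _]) (simp add: a)
  finally show ?thesis using 1 by (simp add: Gc_Pc)
qed

lemma sh_sh: "fps_shift_arg c (fps_shift_arg d f) = fps_shift_arg (c + d) f"
  by (simp add: fps_shift_arg_Gc fps_compose_assoc[symmetric] Gc_comp)

lemma Gc_pow: "Gc c ^ q = fps_X ^ q * inverse (Pc c) ^ q"
  by (simp add: Gc_Pc power_mult_distrib)

lemma Gc_pow_nth: "n < q \<Longrightarrow> (Gc c ^ q) $ n = 0"
  by (simp add: Gc_pow fps_X_power_mult_nth)


lemma tri_box:
  fixes g :: "nat \<Rightarrow> nat \<Rightarrow> 'a::comm_monoid_add"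
  shows "(\<Sum>k\<le>n. \<Sum>i\<le>k. g i (k - i)) = (\<Sum>i\<le>n. \<Sum>j\<le>n. if i + j \<le> n then g i j else (0::'a::comm_monoid_add))"
proof -
  have "(\<Sum>k\<le>n. \<Sum>i\<le>k. g i (k - i)) = (\<Sum>(i,j)\<in>{(i,j). i+j \<le> n}. g i j)"
    using sum.triangle_reindex_eq[of g n] by simp
  also have "{(i,j). i+j \<le> n} = {x \<in> {..n}\<times>{..n}. fst x + snd x \<le> n}" by auto
  also have "(\<Sum>(i,j)\<in>\<dots>. g i j) = (\<Sum>x\<in>{..n}\<times>{..n}. if fst x + snd x \<le> n then g (fst x) (snd x) else 0)"
    by (subst sum.inter_filter) (auto simp: case_prod_beta intro!: sum.cong)
  also have "\<dots> = (\<Sum>i\<le>n. \<Sum>j\<le>n. if i + j \<le> n then g i j else 0)"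
    unfolding sum.cartesian_product by (simp add: case_prod_beta)
  finally show ?thesis .
qed

lemma delta_sum: fixes q N M :: nat shows "(\<Sum>m\<le>M. if q + m = N then F m else (0::'a::comm_monoid_add)) = (if q \<le> N \<and> N - q \<le> M then F (N - q) else 0)"
proof -
  have pt: "(if q + m = N then F m else 0) = (if m = N - q then (if q \<le> N then F m else 0) else 0)" for m
    by (cases "q + m = N") auto
  have "(\<Sum>m\<le>M. if q + m = N then F m else 0) = (\<Sum>m\<le>M. if m = N - q then (if q \<le> N then F m else 0) else 0)"
    using pt by simp
  also have "\<dots> = (if q \<le> N \<and> N - q \<le> M then F (N - q) else 0)"
    by (subst sum.delta) auto
  finally show ?thesis .
qed

lemma fps_mult_nth_box: "N \<le> M \<Longrightarrow> (f * g) $ N = (\<Sum>a\<le>M. \<Sum>b\<le>M. if a + b = N then f $ a * g $ b else 0)"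
proof -
  assume NM: "N \<le> M"
  have "(\<Sum>a\<le>M. \<Sum>b\<le>M. if a + b = N then f $ a * g $ b else 0) = (\<Sum>a\<le>M. if a \<le> N then f $ a * g $ (N - a) else 0)"
    by (rule sum.cong[OF refl], subst delta_sum) (use NM in auto)
  also have "\<dots> = (\<Sum>a\<le>N. f $ a * g $ (N - a))"
    using NM by (subst sum.inter_filter[symmetric]) (auto intro!: sum.cong)
  also have "\<dots> = (f * g) $ N" by (simp add: fps_mult_nth atLeast0AtMost)
  finally show ?thesis ..
qed

locale ys =
  fixes scale :: "complex \<Rightarrow> 'v::ab_group_add \<Rightarrow> 'v"
  assumes vs: "vector_space scale"

sublocale ys \<subseteq> vector_space scale by (rule vs)

context ys begin

definition lin :: "('v \<Rightarrow> 'v) \<Rightarrow> bool" where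
  "lin f \<longleftrightarrow> (\<forall>x y. f (x + y) = f x + f y) \<and> (\<forall>a x. f (scale a x) = scale a (f x))"

lemma lin_add: "lin f \<Longrightarrow> f (x + y) = f x + f y" by (simp add: lin_def)
lemma lin_scale: "lin f \<Longrightarrow> f (scale a x) = scale a (f x)" by (simp add: lin_def)
lemma lin_zero: "lin f \<Longrightarrow> f 0 = 0" using lin_scale[of f 0 0] by simp
lemma lin_neg: "lin f \<Longrightarrow> f (- x) = - f x"
  using lin_scale[of f "-1" x] by simp
lemma lin_diff: "lin f \<Longrightarrow> f (x - y) = f x - f y"
  by (metis diff_conv_add_uminus lin_add lin_neg)
lemma lin_sum: "lin f \<Longrightarrow> f (sum g A) = (\<Sum>a\<in>A. f (g a))"
  by (induct A rule: infinite_finite_induct) (simp_all add: lin_zero lin_add)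
lemma lin_if: "lin f \<Longrightarrow> f (if P then x else 0) = (if P then f x else 0)"
  by (simp add: lin_zero)

lemma lin_id: "lin (\<lambda>x. x)" by (simp add: lin_def)
lemma lin_0: "lin (\<lambda>x. 0)" by (simp add: lin_def)
lemma lin_scalef: "lin (\<lambda>x. scale a x)" by (simp add: lin_def scale_right_distrib)
lemma lin_comp: "lin f \<Longrightarrow> lin g \<Longrightarrow> lin (\<lambda>x. f (g x))" by (simp add: lin_def)
lemma lin_sumf: "(\<And>a. a \<in> A \<Longrightarrow> lin (F a)) \<Longrightarrow> lin (\<lambda>x. \<Sum>a\<in>A. F a x)"
  by (simp add: lin_def sum.distrib scale_sum_right)
lemma lin_scale_comp: "lin f \<Longrightarrow> lin (\<lambda>x. scale a (f x))" by (simp add: lin_def scale_right_distrib)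

definition act :: "(nat \<Rightarrow> 'v \<Rightarrow> 'v) \<Rightarrow> (nat \<Rightarrow> 'v) \<Rightarrow> nat \<Rightarrow> 'v" where
  "act Op y N = (\<Sum>q\<le>N. Op q (y (N - q)))"

definition shop :: "complex \<Rightarrow> (nat \<Rightarrow> 'v \<Rightarrow> 'v) \<Rightarrow> nat \<Rightarrow> 'v \<Rightarrow> 'v" where
  "shop c Op a x = (\<Sum>q\<le>a. scale ((Gc c ^ q) $ a) (Op q x))"

definition vshift :: "complex \<Rightarrow> (nat \<Rightarrow> 'v) \<Rightarrow> nat \<Rightarrow> 'v" where
  "vshift c y N = (\<Sum>m\<le>N. scale ((Gc c ^ m) $ N) (y m))"

definition scl :: "complex fps \<Rightarrow> nat \<Rightarrow> 'v \<Rightarrow> 'v" where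
  "scl f q x = scale (f $ q) x"

definition cst :: "'v \<Rightarrow> nat \<Rightarrow> 'v" where
  "cst x N = (if N = 0 then x else 0)"

lemma act_box: "N \<le> M \<Longrightarrow> act Op y N = (\<Sum>q\<le>M. \<Sum>m\<le>M. if q + m = N then Op q (y m) else 0)"
proof -
  assume NM: "N \<le> M"
  have "(\<Sum>q\<le>M. \<Sum>m\<le>M. if q + m = N then Op q (y m) else 0) = (\<Sum>q\<le>M. if q \<le> N then Op q (y (N - q)) else 0)"
    by (rule sum.cong[OF refl], subst delta_sum) (use NM in auto)
  also have "\<dots> = (\<Sum>q\<le>N. Op q (y (N - q)))"
    using NM by (subst sum.inter_filter[symmetric]) (auto intro!: sum.cong)
  finally show ?thesis by (simp add: act_def)
qed

lemma shop_box: "a \<le> M \<Longrightarrow> shop c Op a x = (\<Sum>q\<le>M. scale ((Gc c ^ q) $ a) (Op q x))"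
  unfolding shop_def
proof (rule sum.mono_neutral_left)
  show "\<forall>i\<in>{..M} - {..a}. scale ((Gc c ^ i) $ a) (Op i x) = 0"
  proof
    fix i assume "i \<in> {..M} - {..a}"
    hence "a < i" by simp
    thus "scale ((Gc c ^ i) $ a) (Op i x) = 0" using Gc_pow_nth[of a i c] by simp
  qed
qed auto

lemma vshift_box: "N \<le> M \<Longrightarrow> vshift c y N = (\<Sum>m\<le>M. scale ((Gc c ^ m) $ N) (y m))"
  unfolding vshift_def
proof (rule sum.mono_neutral_left)
  show "\<forall>i\<in>{..M} - {..N}. scale ((Gc c ^ i) $ N) (y i) = 0"
  proof
    fix i assume "i \<in> {..M} - {..N}"
    hence "N < i" by simp
    thus "scale ((Gc c ^ i) $ N) (y i) = 0" using Gc_pow_nth[of N i c] by simp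
  qed
qed auto

end

lemma if_sum0: "(if P then sum f A else 0) = sum (\<lambda>x. if P then f x else (0::'a::comm_monoid_add)) A"
  by (cases P) auto

lemma delta_comp1:
  fixes X :: "nat \<Rightarrow> nat \<Rightarrow> 'a::comm_monoid_add"
  shows "(\<Sum>m'\<le>N. if q1 + m' = N then (\<Sum>q2\<le>N. \<Sum>m\<le>N. if q2 + m = m' then X q2 m else 0) else 0)
       = (\<Sum>q2\<le>N. \<Sum>m\<le>N. if q1 + q2 + m = N then X q2 m else 0)"
proof -
  have "(\<Sum>m'\<le>N. if q1 + m' = N then (\<Sum>q2\<le>N. \<Sum>m\<le>N. if q2 + m = m' then X q2 m else 0) else 0)
      = (\<Sum>m'\<le>N. \<Sum>q2\<le>N. \<Sum>m\<le>N. if m' = q2 + m then (if q1 + q2 + m = N then X q2 m else 0) else 0)"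
    apply (simp only: if_sum0)
    apply (intro sum.cong refl)
    by auto
  also have "\<dots> = (\<Sum>q2\<le>N. \<Sum>m\<le>N. \<Sum>m'\<le>N. if m' = q2 + m then (if q1 + q2 + m = N then X q2 m else 0) else 0)"
    by (subst sum.swap) (subst (2) sum.swap, rule refl)
  also have "\<dots> = (\<Sum>q2\<le>N. \<Sum>m\<le>N. if q1 + q2 + m = N then X q2 m else 0)"
    by (intro sum.cong refl) (subst sum.delta, auto)
  finally show ?thesis .
qed

lemma swap3: "(\<Sum>a\<in>A. \<Sum>b\<in>B. \<Sum>m\<in>C. f a b m) = (\<Sum>m\<in>C. \<Sum>a\<in>A. \<Sum>b\<in>B. f a b m)"
proof -
  have "(\<Sum>a\<in>A. \<Sum>b\<in>B. \<Sum>m\<in>C. f a b m) = (\<Sum>a\<in>A. \<Sum>m\<in>C. \<Sum>b\<in>B. f a b m)"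
    by (rule sum.cong[OF refl]) (rule sum.swap)
  also have "\<dots> = (\<Sum>m\<in>C. \<Sum>a\<in>A. \<Sum>b\<in>B. f a b m)" by (rule sum.swap)
  finally show ?thesis .
qed

lemma delta_sum': fixes m N M :: nat
  shows "(\<Sum>q\<le>M. if q + m = N then F q else (0::'a::comm_monoid_add)) = (if m \<le> N \<and> N - m \<le> M then F (N - m) else 0)"
  using delta_sum[where q=m and N=N and M=M and F=F] by (simp add: add.commute)

lemma delta_comp2:
  fixes Z :: "nat \<Rightarrow> nat \<Rightarrow> nat \<Rightarrow> 'a::comm_monoid_add"
  shows "(\<Sum>q\<le>N. \<Sum>m\<le>N. if q + m = N then (\<Sum>a\<le>N. \<Sum>b\<le>N. if a + b = q then Z a b m else 0) else 0)
       = (\<Sum>a\<le>N. \<Sum>b\<le>N. \<Sum>m\<le>N. if a + b + m = N then Z a b m else 0)"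
proof -
  let ?G = "\<lambda>q m. \<Sum>a\<le>N. \<Sum>b\<le>N. if a + b = q then Z a b m else 0"
  have "(\<Sum>q\<le>N. \<Sum>m\<le>N. if q + m = N then ?G q m else 0) = (\<Sum>m\<le>N. \<Sum>q\<le>N. if q + m = N then ?G q m else 0)"
    by (rule sum.swap)
  also have "\<dots> = (\<Sum>m\<le>N. ?G (N - m) m)"
  proof (rule sum.cong[OF refl])
    fix m assume "m \<in> {..N}"
    then show "(\<Sum>q\<le>N. if q + m = N then ?G q m else 0) = ?G (N - m) m"
      by (subst delta_sum') simp
  qed
  also have "\<dots> = (\<Sum>m\<le>N. \<Sum>a\<le>N. \<Sum>b\<le>N. if a + b + m = N then Z a b m else 0)"
    by (intro sum.cong refl) auto
  also have "\<dots> = (\<Sum>a\<le>N. \<Sum>b\<le>N. \<Sum>m\<le>N. if a + b + m = N then Z a b m else 0)"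
    by (rule swap3[symmetric])
  finally show ?thesis .
qed

context ys begin

lemma act_sum: "(\<And>q. lin (Op q)) \<Longrightarrow> act Op (\<lambda>N. \<Sum>b\<in>B. y b N) N = (\<Sum>b\<in>B. act Op (y b) N)"
  unfolding act_def by (simp add: lin_sum) (rule sum.swap)

lemma act_add: "(\<And>q. lin (Op q)) \<Longrightarrow> act Op (\<lambda>N. y1 N + y2 N) N = act Op y1 N + act Op y2 N"
  unfolding act_def by (simp add: lin_add sum.distrib)

lemma act_neg: "(\<And>q. lin (Op q)) \<Longrightarrow> act Op (\<lambda>N. - y N) N = - act Op y N"
  unfolding act_def by (simp add: lin_neg sum_negf)

lemma act_diff: "(\<And>q. lin (Op q)) \<Longrightarrow> act Op (\<lambda>N. y1 N - y2 N) N = act Op y1 N - act Op y2 N"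
  unfolding act_def by (simp add: lin_diff sum_subtractf)

lemma act_zero: "(\<And>q. lin (Op q)) \<Longrightarrow> act Op (\<lambda>N. 0) N = 0"
  unfolding act_def by (simp add: lin_zero)

lemma act_cong: "(\<And>N. y1 N = y2 N) \<Longrightarrow> act Op y1 N = act Op y2 N"
  by (simp add: act_def)

lemma act_act_exp:
  assumes l1: "\<And>q. lin (Op1 q)"
  shows "act Op1 (act Op2 y) N = (\<Sum>q1\<le>N. \<Sum>q2\<le>N. \<Sum>m\<le>N. if q1 + q2 + m = N then Op1 q1 (Op2 q2 (y m)) else 0)"
proof -
  have "act Op1 (act Op2 y) N = (\<Sum>q1\<le>N. \<Sum>m'\<le>N. if q1 + m' = N then Op1 q1 (act Op2 y m') else 0)"
    by (rule act_box) simp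
  also have "\<dots> = (\<Sum>q1\<le>N. \<Sum>m'\<le>N. if q1 + m' = N then (\<Sum>q2\<le>N. \<Sum>m\<le>N. if q2 + m = m' then Op1 q1 (Op2 q2 (y m)) else 0) else 0)"
  proof (intro sum.cong refl)
    fix q1 m' assume "m' \<in> {..N}"
    hence "act Op2 y m' = (\<Sum>q2\<le>N. \<Sum>m\<le>N. if q2 + m = m' then Op2 q2 (y m) else 0)"
      by (intro act_box) simp
    thus "(if q1 + m' = N then Op1 q1 (act Op2 y m') else 0) =
         (if q1 + m' = N then \<Sum>q2\<le>N. \<Sum>m\<le>N. if q2 + m = m' then Op1 q1 (Op2 q2 (y m)) else 0 else 0)"
      by (simp add: lin_sum[OF l1] lin_if[OF l1])
  qed
  also have "\<dots> = (\<Sum>q1\<le>N. \<Sum>q2\<le>N. \<Sum>m\<le>N. if q1 + q2 + m = N then Op1 q1 (Op2 q2 (y m)) else 0)"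
    by (rule sum.cong[OF refl], rule delta_comp1)
  finally show ?thesis .
qed

lemma act_comm:
  assumes l1: "\<And>q. lin (Op1 q)" and l2: "\<And>q. lin (Op2 q)"
    and c: "\<And>q1 q2 x. Op1 q1 (Op2 q2 x) = Op2 q2 (Op1 q1 x)"
  shows "act Op1 (act Op2 y) N = act Op2 (act Op1 y) N"
proof -
  have "(\<Sum>q1\<le>N. \<Sum>q2\<le>N. \<Sum>m\<le>N. if q1 + q2 + m = N then Op2 q1 (Op1 q2 (y m)) else 0)
      = (\<Sum>q2\<le>N. \<Sum>q1\<le>N. \<Sum>m\<le>N. if q1 + q2 + m = N then Op2 q1 (Op1 q2 (y m)) else 0)"
    by (rule sum.swap)
  also have "\<dots> = (\<Sum>q1\<le>N. \<Sum>q2\<le>N. \<Sum>m\<le>N. if q1 + q2 + m = N then Op1 q1 (Op2 q2 (y m)) else 0)"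
    by (intro sum.cong refl) (simp add: c add.commute)
  finally show ?thesis unfolding act_act_exp[OF l1] act_act_exp[OF l2] by simp
qed

definition smul :: "complex fps \<Rightarrow> (nat \<Rightarrow> 'v) \<Rightarrow> nat \<Rightarrow> 'v" where
  "smul f y = act (scl f) y"

lemma lin_scl: "lin (scl f q)" unfolding lin_def scl_def by (simp add: scale_right_distrib)

lemma smul_smul: "smul f (smul g y) N = smul (f * g) y N"
proof -
  have "smul f (smul g y) N = (\<Sum>q1\<le>N. \<Sum>q2\<le>N. \<Sum>m\<le>N. if q1 + q2 + m = N then scale (f $ q1 * g $ q2) (y m) else 0)"
    unfolding smul_def act_act_exp[OF lin_scl] unfolding scl_def by (simp cong: if_cong)
  also have "\<dots> = (\<Sum>q\<le>N. \<Sum>m\<le>N. if q + m = N then (\<Sum>a\<le>N. \<Sum>b\<le>N. if a + b = q then scale (f $ a * g $ b) (y m) else 0) else 0)"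
    by (rule delta_comp2[symmetric])
  also have "\<dots> = (\<Sum>q\<le>N. \<Sum>m\<le>N. if q + m = N then scale ((f * g) $ q) (y m) else 0)"
  proof (intro sum.cong refl)
    fix q m assume q: "q \<in> {..N}"
    show "(if q + m = N then \<Sum>a\<le>N. \<Sum>b\<le>N. if a + b = q then scale (f $ a * g $ b) (y m) else 0 else 0) =
          (if q + m = N then scale ((f * g) $ q) (y m) else 0)"
      using q by (simp add: fps_mult_nth_box[of q N f g] scale_sum_left if_distrib[of "\<lambda>c. scale c (y m)"] cong: if_cong)
  qed
  also have "\<dots> = smul (f * g) y N"
    unfolding smul_def by (subst act_box[of N N]) (simp_all add: scl_def cong: if_cong)
  finally show ?thesis .
qed

lemma smul_cst: "smul f (cst x) N = scale (f $ N) x"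
  unfolding smul_def act_def scl_def cst_def
  by (simp add: if_distrib[of "scale _"] sum.delta' cong: if_cong)

lemma smul_one: "smul 1 y N = y N"
  unfolding smul_def act_def scl_def
  by (simp add: if_distrib[of "\<lambda>c. scale c _"] sum.delta' cong: if_cong)

lemma act_smul: "(\<And>q. lin (Op q)) \<Longrightarrow> act Op (smul f y) N = smul f (act Op y) N"
  unfolding smul_def by (rule act_comm) (simp_all add: lin_scl scl_def lin_scale)

lemma smul_lin: "(\<And>q. lin (Op q)) \<Longrightarrow> smul f y N = act (scl f) y N" by (simp add: smul_def)

end

lemma swap4: "(\<Sum>a\<in>A. \<Sum>b\<in>B. \<Sum>q\<in>C. \<Sum>m\<in>D. f a b q m) = (\<Sum>q\<in>C. \<Sum>m\<in>D. \<Sum>a\<in>A. \<Sum>b\<in>B. f a b q m)"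
proof -
  have "(\<Sum>a\<in>A. \<Sum>b\<in>B. \<Sum>q\<in>C. \<Sum>m\<in>D. f a b q m) = (\<Sum>a\<in>A. \<Sum>q\<in>C. \<Sum>b\<in>B. \<Sum>m\<in>D. f a b q m)"
    by (rule sum.cong[OF refl]) (rule sum.swap)
  also have "\<dots> = (\<Sum>q\<in>C. \<Sum>a\<in>A. \<Sum>b\<in>B. \<Sum>m\<in>D. f a b q m)" by (rule sum.swap)
  also have "\<dots> = (\<Sum>q\<in>C. \<Sum>m\<in>D. \<Sum>a\<in>A. \<Sum>b\<in>B. f a b q m)"
    by (rule sum.cong[OF refl]) (rule swap3)
  finally show ?thesis .
qed

lemma perm4: "(\<Sum>a\<in>A. \<Sum>r\<in>B. \<Sum>m\<in>C. \<Sum>q\<in>D. f a r m q) = (\<Sum>r\<in>B. \<Sum>q\<in>D. \<Sum>m\<in>C. \<Sum>a\<in>A. f a r m q)"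
proof -
  have "(\<Sum>a\<in>A. \<Sum>r\<in>B. \<Sum>m\<in>C. \<Sum>q\<in>D. f a r m q) = (\<Sum>r\<in>B. \<Sum>a\<in>A. \<Sum>m\<in>C. \<Sum>q\<in>D. f a r m q)"
    by (rule sum.swap)
  also have "\<dots> = (\<Sum>r\<in>B. \<Sum>q\<in>D. \<Sum>a\<in>A. \<Sum>m\<in>C. f a r m q)"
    by (rule sum.cong[OF refl]) (rule swap3)
  also have "\<dots> = (\<Sum>r\<in>B. \<Sum>q\<in>D. \<Sum>m\<in>C. \<Sum>a\<in>A. f a r m q)"
    by (intro sum.cong[OF refl]) (rule sum.swap)
  finally show ?thesis .
qed

definition Cf :: "complex \<Rightarrow> nat \<Rightarrow> nat \<Rightarrow> nat \<Rightarrow> nat \<Rightarrow> complex" where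
  "Cf c N r q m = (fps_X ^ (r + m) * Gc c ^ q) $ N"

lemma Cf_sum: "(\<Sum>a\<le>N. if a + r + m = N then (Gc c ^ q) $ a else 0) = Cf c N r q m"
proof -
  have "(\<Sum>a\<le>N. if a + r + m = N then (Gc c ^ q) $ a else 0) = (\<Sum>a\<le>N. if a + (r + m) = N then (Gc c ^ q) $ a else 0)"
    by (simp add: add.assoc)
  also have "\<dots> = (if r + m \<le> N then (Gc c ^ q) $ (N - (r + m)) else 0)"
    by (subst delta_sum') auto
  also have "\<dots> = Cf c N r q m"
    by (simp add: Cf_def fps_X_power_mult_nth)
  finally show ?thesis .
qed

context ys begin

lemma lin_shop: "(\<And>q. lin (Op q)) \<Longrightarrow> lin (shop c Op a)"
  unfolding shop_def[abs_def] by (intro lin_sumf lin_scale_comp) auto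

lemma collect:
  "(\<Sum>a\<le>N. \<Sum>r\<le>N. \<Sum>m\<le>N. if a + r + m = N then (\<Sum>q\<le>N. scale ((Gc c ^ q) $ a) (W r q m)) else 0)
   = (\<Sum>r\<le>N. \<Sum>q\<le>N. \<Sum>m\<le>N. scale (Cf c N r q m) (W r q m))"
proof -
  have "(\<Sum>a\<le>N. \<Sum>r\<le>N. \<Sum>m\<le>N. if a + r + m = N then (\<Sum>q\<le>N. scale ((Gc c ^ q) $ a) (W r q m)) else 0)
      = (\<Sum>a\<le>N. \<Sum>r\<le>N. \<Sum>m\<le>N. \<Sum>q\<le>N. if a + r + m = N then scale ((Gc c ^ q) $ a) (W r q m) else 0)"
    by (simp only: if_sum0)
  also have "\<dots> = (\<Sum>r\<le>N. \<Sum>q\<le>N. \<Sum>m\<le>N. \<Sum>a\<le>N. if a + r + m = N then scale ((Gc c ^ q) $ a) (W r q m) else 0)"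
    by (rule perm4)
  also have "\<dots> = (\<Sum>r\<le>N. \<Sum>q\<le>N. \<Sum>m\<le>N. scale (\<Sum>a\<le>N. if a + r + m = N then (Gc c ^ q) $ a else 0) (W r q m))"
    by (intro sum.cong refl) (simp add: scale_sum_left if_distrib[of "\<lambda>x. scale x _"] cong: if_cong)
  also have "\<dots> = (\<Sum>r\<le>N. \<Sum>q\<le>N. \<Sum>m\<le>N. scale (Cf c N r q m) (W r q m))"
    by (simp only: Cf_sum)
  finally show ?thesis .
qed

lemma exp2:
  assumes l2: "\<And>q. lin (Op2 q)"
  shows "act (shop c Op2) (act Op1 z) N = (\<Sum>r\<le>N. \<Sum>q\<le>N. \<Sum>m\<le>N. scale (Cf c N r q m) (Op2 q (Op1 r (z m))))"
proof -
  have "act (shop c Op2) (act Op1 z) N = (\<Sum>a\<le>N. \<Sum>r\<le>N. \<Sum>m\<le>N. if a + r + m = N then shop c Op2 a (Op1 r (z m)) else 0)"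
    by (rule act_act_exp) (rule lin_shop[OF l2])
  also have "\<dots> = (\<Sum>a\<le>N. \<Sum>r\<le>N. \<Sum>m\<le>N. if a + r + m = N then (\<Sum>q\<le>N. scale ((Gc c ^ q) $ a) (Op2 q (Op1 r (z m)))) else 0)"
    by (intro sum.cong refl) (simp add: shop_box)
  also have "\<dots> = (\<Sum>r\<le>N. \<Sum>q\<le>N. \<Sum>m\<le>N. scale (Cf c N r q m) (Op2 q (Op1 r (z m))))"
    by (rule collect)
  finally show ?thesis .
qed

lemma exp1:
  assumes l1: "\<And>q. lin (Op1 q)"
  shows "act Op1 (act (shop c Op2) z) N = (\<Sum>r\<le>N. \<Sum>q\<le>N. \<Sum>m\<le>N. scale (Cf c N r q m) (Op1 r (Op2 q (z m))))"
proof -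
  have "act Op1 (act (shop c Op2) z) N = (\<Sum>r\<le>N. \<Sum>a\<le>N. \<Sum>m\<le>N. if r + a + m = N then Op1 r (shop c Op2 a (z m)) else 0)"
    by (rule act_act_exp) (rule l1)
  also have "\<dots> = (\<Sum>a\<le>N. \<Sum>r\<le>N. \<Sum>m\<le>N. if a + r + m = N then Op1 r (shop c Op2 a (z m)) else 0)"
    by (subst sum.swap) (simp add: add.commute add.left_commute)
  also have "\<dots> = (\<Sum>a\<le>N. \<Sum>r\<le>N. \<Sum>m\<le>N. if a + r + m = N then (\<Sum>q\<le>N. scale ((Gc c ^ q) $ a) (Op1 r (Op2 q (z m)))) else 0)"
    by (intro sum.cong refl) (simp add: shop_box lin_sum[OF l1] lin_scale[OF l1])
  also have "\<dots> = (\<Sum>r\<le>N. \<Sum>q\<le>N. \<Sum>m\<le>N. scale (Cf c N r q m) (Op1 r (Op2 q (z m))))"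
    by (rule collect)
  finally show ?thesis .
qed

end

context ys begin

lemma vshift_act:
  assumes l: "\<And>q. lin (Op q)"
  shows "vshift c (act Op y) N = act (shop c Op) (vshift c y) N"
proof -
  let ?G = "\<lambda>k. Gc c ^ k"
  have "vshift c (act Op y) N = (\<Sum>r\<le>N. scale (?G r $ N) (\<Sum>q\<le>N. \<Sum>m\<le>N. if q + m = r then Op q (y m) else 0))"
    unfolding vshift_def by (intro sum.cong refl) (simp add: act_box)
  also have "\<dots> = (\<Sum>r\<le>N. \<Sum>q\<le>N. \<Sum>m\<le>N. if q + m = r then scale (?G r $ N) (Op q (y m)) else 0)"
    by (simp add: scale_sum_right if_distrib[of "scale _"] cong: if_cong)
  also have "\<dots> = (\<Sum>q\<le>N. \<Sum>m\<le>N. \<Sum>r\<le>N. if r = q + m then scale (?G (q + m) $ N) (Op q (y m)) else 0)"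
    by (subst swap3[symmetric]) (intro sum.cong refl, auto)
  also have "\<dots> = (\<Sum>q\<le>N. \<Sum>m\<le>N. scale (?G (q + m) $ N) (Op q (y m)))"
    by (intro sum.cong refl) (auto simp: sum.delta' Gc_pow_nth)
  finally have L: "vshift c (act Op y) N = (\<Sum>q\<le>N. \<Sum>m\<le>N. scale (?G (q + m) $ N) (Op q (y m)))" .
  have "act (shop c Op) (vshift c y) N = (\<Sum>a\<le>N. \<Sum>b\<le>N. if a + b = N then shop c Op a (vshift c y b) else 0)"
    by (rule act_box) simp
  also have "\<dots> = (\<Sum>a\<le>N. \<Sum>b\<le>N. if a + b = N then (\<Sum>q\<le>N. \<Sum>m\<le>N. scale (?G q $ a * ?G m $ b) (Op q (y m))) else 0)"
  proof (intro sum.cong refl)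
    fix a b assume a: "a \<in> {..N}" and b: "b \<in> {..N}"
    have "shop c Op a (vshift c y b) = (\<Sum>q\<le>N. scale (?G q $ a) (Op q (\<Sum>m\<le>N. scale (?G m $ b) (y m))))"
      using a b by (simp add: shop_box vshift_box)
    also have "\<dots> = (\<Sum>q\<le>N. \<Sum>m\<le>N. scale (?G q $ a * ?G m $ b) (Op q (y m)))"
      by (simp add: lin_sum[OF l] lin_scale[OF l] scale_sum_right)
    finally show "(if a + b = N then shop c Op a (vshift c y b) else 0) =
        (if a + b = N then \<Sum>q\<le>N. \<Sum>m\<le>N. scale (?G q $ a * ?G m $ b) (Op q (y m)) else 0)" by simp
  qed
  also have "\<dots> = (\<Sum>a\<le>N. \<Sum>b\<le>N. \<Sum>q\<le>N. \<Sum>m\<le>N. if a + b = N then scale (?G q $ a * ?G m $ b) (Op q (y m)) else 0)"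
    by (simp only: if_sum0)
  also have "\<dots> = (\<Sum>q\<le>N. \<Sum>m\<le>N. \<Sum>a\<le>N. \<Sum>b\<le>N. if a + b = N then scale (?G q $ a * ?G m $ b) (Op q (y m)) else 0)"
    by (rule swap4)
  also have "\<dots> = (\<Sum>q\<le>N. \<Sum>m\<le>N. scale (\<Sum>a\<le>N. \<Sum>b\<le>N. if a + b = N then ?G q $ a * ?G m $ b else 0) (Op q (y m)))"
    by (intro sum.cong refl) (simp add: scale_sum_left if_distrib[of "\<lambda>x. scale x _"] cong: if_cong)
  also have "\<dots> = (\<Sum>q\<le>N. \<Sum>m\<le>N. scale (?G (q + m) $ N) (Op q (y m)))"
    by (intro sum.cong refl) (simp add: fps_mult_nth_box[symmetric] power_add)
  finally show ?thesis using L by simp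
qed

lemma shop_scl: "shop c (scl f) a x = scl (fps_shift_arg c f) a x"
  unfolding shop_def scl_def fps_shift_arg_Gc fps_compose_nth
  by (simp add: scale_sum_left atLeast0AtMost mult.commute)

lemma shop_scl_fun: "shop c (scl f) = scl (fps_shift_arg c f)"
  by (intro ext) (rule shop_scl)

lemma vshift_smul: "vshift c (smul f y) N = smul (fps_shift_arg c f) (vshift c y) N"
  unfolding smul_def by (simp add: vshift_act lin_scl shop_scl_fun)

lemma vshift_cst: "vshift c (cst x) N = cst x N"
  unfolding vshift_def cst_def
  by (simp add: if_distrib[of "scale _"] sum.delta' cong: if_cong)

lemma vshift_sum: "vshift c (\<lambda>N. \<Sum>b\<in>B. y b N) N = (\<Sum>b\<in>B. vshift c (y b) N)"
  unfolding vshift_def by (simp add: scale_sum_right) (rule sum.swap)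

lemma vshift_neg: "vshift c (\<lambda>N. - y N) N = - vshift c y N"
  unfolding vshift_def by (simp add: sum_negf)

lemma vshift_zero: "vshift c (\<lambda>N. 0) N = 0"
  unfolding vshift_def by simp

lemma vshift_cong: "(\<And>N. y1 N = y2 N) \<Longrightarrow> vshift c y1 N = vshift c y2 N"
  by (simp add: vshift_def)

lemma smul_cong: "(\<And>N. y1 N = y2 N) \<Longrightarrow> smul f y1 N = smul f y2 N"
  by (simp add: smul_def act_def)

lemma smul_zero: "smul f (\<lambda>N. 0) N = 0"
  unfolding smul_def by (rule act_zero) (rule lin_scl)

end

lemma Cf_rel: "Cf c N r (Suc q) m - Cf c N (Suc r) q m = - c * Cf c N (Suc r) (Suc q) m"
proof -
  let ?X = "fps_X :: complex fps" and ?G = "Gc c"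
  have "?X ^ (r + m) * ?G ^ Suc q - ?X ^ (Suc r + m) * ?G ^ q = ?X ^ (r + m) * ?G ^ q * (?G - ?X)"
    by (simp add: algebra_simps)
  also have "\<dots> = - (fps_const c * (?X ^ (Suc r + m) * ?G ^ Suc q))"
    by (simp add: Gc_diff algebra_simps)
  finally have "(?X ^ (r + m) * ?G ^ Suc q - ?X ^ (Suc r + m) * ?G ^ q) $ N = (- (fps_const c * (?X ^ (Suc r + m) * ?G ^ Suc q))) $ N"
    by simp
  thus ?thesis unfolding Cf_def by simp
qed

lemma Cf_top_r: "0 < q \<Longrightarrow> Cf c N N q m = 0"
  unfolding Cf_def by (simp add: fps_X_power_mult_nth Gc_pow_nth)

lemma Cf_top_q: "0 < r + m \<Longrightarrow> Cf c N r N m = 0"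
  unfolding Cf_def by (auto simp: fps_X_power_mult_nth intro!: Gc_pow_nth)

context ys begin

lemma shift_r:
  assumes a0: "\<And>q m. a 0 q m = 0" and b0: "\<And>r m. a r 0 m = 0"
  shows "(\<Sum>r\<le>N. \<Sum>q\<le>N. \<Sum>m\<le>N. scale (Cf c N r q m) (a (Suc r) q m))
       = (\<Sum>r\<le>N. \<Sum>q\<le>N. \<Sum>m\<le>N. scale (if r = 0 then 0 else Cf c N (r - 1) q m) (a r q m))"
proof -
  define F where "F r = (\<Sum>q\<le>N. \<Sum>m\<le>N. scale (if r = 0 then 0 else Cf c N (r - 1) q m) (a r q m))" for r
  have F0: "F 0 = 0" by (simp add: F_def)
  have FN: "F (Suc N) = 0"
    unfolding F_def
  proof (intro sum.neutral ballI)
    fix q m assume "q \<in> {..N}" "m \<in> {..N}"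
    show "scale (if Suc N = 0 then 0 else Cf c N (Suc N - 1) q m) (a (Suc N) q m) = 0"
      by (cases "q = 0") (auto simp: b0 Cf_top_r)
  qed
  have "(\<Sum>r\<le>N. \<Sum>q\<le>N. \<Sum>m\<le>N. scale (Cf c N r q m) (a (Suc r) q m)) = (\<Sum>r\<le>N. F (Suc r))"
    by (simp add: F_def)
  also have "\<dots> = (\<Sum>r\<le>Suc N. F r)" by (subst sum.atMost_Suc_shift) (simp add: F0)
  also have "\<dots> = (\<Sum>r\<le>N. F r)" by (simp add: FN)
  finally show ?thesis by (simp add: F_def)
qed

lemma shift_q:
  assumes a0: "\<And>q m. a 0 q m = 0" and b0: "\<And>r m. a r 0 m = 0"
  shows "(\<Sum>r\<le>N. \<Sum>q\<le>N. \<Sum>m\<le>N. scale (Cf c N r q m) (a r (Suc q) m))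
       = (\<Sum>r\<le>N. \<Sum>q\<le>N. \<Sum>m\<le>N. scale (if q = 0 then 0 else Cf c N r (q - 1) m) (a r q m))"
proof (rule sum.cong[OF refl])
  fix r assume "r \<in> {..N}"
  define F where "F q = (\<Sum>m\<le>N. scale (if q = 0 then 0 else Cf c N r (q - 1) m) (a r q m))" for q
  have F0: "F 0 = 0" by (simp add: F_def)
  have FN: "F (Suc N) = 0"
    unfolding F_def
  proof (intro sum.neutral ballI)
    fix m assume "m \<in> {..N}"
    show "scale (if Suc N = 0 then 0 else Cf c N r (Suc N - 1) m) (a r (Suc N) m) = 0"
      by (cases "r + m = 0") (auto simp: a0 Cf_top_q)
  qed
  have "(\<Sum>q\<le>N. \<Sum>m\<le>N. scale (Cf c N r q m) (a r (Suc q) m)) = (\<Sum>q\<le>N. F (Suc q))"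
    by (simp add: F_def)
  also have "\<dots> = (\<Sum>q\<le>Suc N. F q)" by (subst sum.atMost_Suc_shift) (simp add: F0)
  also have "\<dots> = (\<Sum>q\<le>N. F q)" by (simp add: FN)
  finally show "(\<Sum>q\<le>N. \<Sum>m\<le>N. scale (Cf c N r q m) (a r (Suc q) m)) =
         (\<Sum>q\<le>N. \<Sum>m\<le>N. scale (if q = 0 then 0 else Cf c N r (q - 1) m) (a r q m))"
    by (simp add: F_def)
qed

lemma shift_sum:
  assumes a0: "\<And>q m. a 0 q m = 0" and b0: "\<And>r m. a r 0 m = 0"
  shows "(\<Sum>r\<le>N. \<Sum>q\<le>N. \<Sum>m\<le>N. scale (Cf c N r q m) (a (Suc r) q m - a r (Suc q) m))
       = scale (- c) (\<Sum>r\<le>N. \<Sum>q\<le>N. \<Sum>m\<le>N. scale (Cf c N r q m) (a r q m))"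
proof -
  have "(\<Sum>r\<le>N. \<Sum>q\<le>N. \<Sum>m\<le>N. scale (Cf c N r q m) (a (Suc r) q m - a r (Suc q) m))
      = (\<Sum>r\<le>N. \<Sum>q\<le>N. \<Sum>m\<le>N. scale (Cf c N r q m) (a (Suc r) q m))
        - (\<Sum>r\<le>N. \<Sum>q\<le>N. \<Sum>m\<le>N. scale (Cf c N r q m) (a r (Suc q) m))"
    by (simp add: scale_right_diff_distrib sum_subtractf)
  also have "\<dots> = (\<Sum>r\<le>N. \<Sum>q\<le>N. \<Sum>m\<le>N. scale (if r = 0 then 0 else Cf c N (r - 1) q m) (a r q m))
        - (\<Sum>r\<le>N. \<Sum>q\<le>N. \<Sum>m\<le>N. scale (if q = 0 then 0 else Cf c N r (q - 1) m) (a r q m))"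
    by (simp only: shift_r[where a=a, OF a0 b0] shift_q[where a=a, OF a0 b0])
  also have "\<dots> = (\<Sum>r\<le>N. \<Sum>q\<le>N. \<Sum>m\<le>N. scale (- c) (scale (Cf c N r q m) (a r q m)))"
    unfolding sum_subtractf[symmetric]
  proof (intro sum.cong refl)
    fix r q m
    show "scale (if r = 0 then 0 else Cf c N (r - 1) q m) (a r q m) -
          scale (if q = 0 then 0 else Cf c N r (q - 1) m) (a r q m) =
          scale (- c) (scale (Cf c N r q m) (a r q m))"
    proof (cases "r = 0 \<or> q = 0")
      case True thus ?thesis using a0 b0 by auto
    next
      case False
      then obtain r' q' where r: "r = Suc r'" and q: "q = Suc q'" by (metis not0_implies_Suc)
      have "scale (Cf c N r' (Suc q') m) (a r q m) - scale (Cf c N (Suc r') q' m) (a r q m)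
          = scale (Cf c N r' (Suc q') m - Cf c N (Suc r') q' m) (a r q m)"
        by (simp add: scale_left_diff_distrib)
      also have "\<dots> = scale (- c) (scale (Cf c N r q m) (a r q m))"
        by (simp add: Cf_rel r q)
      finally show ?thesis by (simp add: r q)
    qed
  qed
  also have "\<dots> = scale (- c) (\<Sum>r\<le>N. \<Sum>q\<le>N. \<Sum>m\<le>N. scale (Cf c N r q m) (a r q m))"
    by (simp add: scale_sum_right)
  finally show ?thesis .
qed

end

definition sg :: "nat \<Rightarrow> complex" where "sg e = (if even e then 1 else -1)"

lemma sum_min_diff:
  fixes h :: "nat \<Rightarrow> nat \<Rightarrow> 'a::ab_group_add"
  assumes anti: "\<And>e f. h e f = - h f e" and diag: "\<And>e. h e e = 0"
  shows "(\<Sum>e<min (Suc r) q. h e (r + q - e)) - (\<Sum>e<min r (Suc q). h e (r + q - e)) = h r q"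
proof (cases "r < q")
  case True
  hence "min (Suc r) q = Suc r" "min r (Suc q) = r" by auto
  thus ?thesis by simp
next
  case False
  show ?thesis
  proof (cases "r = q")
    case True
    thus ?thesis by (simp add: diag)
  next
    case False
    with \<open>\<not> r < q\<close> have "q < r" by simp
    hence "min (Suc r) q = q" "min r (Suc q) = Suc q" by auto
    thus ?thesis using \<open>q < r\<close> by (simp add: anti[of q r])
  qed
qed

locale yrep = ys scale for scale :: "complex \<Rightarrow> 'v::ab_group_add \<Rightarrow> 'v" +
  fixes K :: nat and s :: "nat \<Rightarrow> int" and t :: "nat \<Rightarrow> nat \<Rightarrow> nat \<Rightarrow> 'v \<Rightarrow> 'v"
  assumes lin_t: "\<lbrakk>i \<in> {1..K}; j \<in> {1..K}; 1 \<le> r\<rbrakk> \<Longrightarrow> lin (t i j r)"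
    and rel: "\<lbrakk>i \<in> {1..K}; j \<in> {1..K}; k \<in> {1..K}; l \<in> {1..K}; 1 \<le> r; 1 \<le> q\<rbrakk> \<Longrightarrow>
        t i j r (t k l q v)
          - sgnv ((par s i + par s j) * (par s k + par s l)) (t k l q (t i j r v))
        = sgnv (par s i * par s j + par s i * par s k + par s j * par s k)
            (\<Sum>a<min r q. tt t k j a (tt t i l (r + q - 1 - a) v)
                          - tt t k j (r + q - 1 - a) (tt t i l a v))"
    and spm: "i \<in> {1..K} \<Longrightarrow> s i = 1 \<or> s i = -1"
begin

lemma sgnv_scale: "sgnv e x = scale (sg e) x"
  by (simp add: sgnv_def sg_def)

definition Tm :: "nat \<Rightarrow> nat \<Rightarrow> nat \<Rightarrow> 'v \<Rightarrow> 'v" where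
  "Tm i j = tt t i j"

lemma Tm_apply: "Tm i j q x = tt t i j q x" by (simp add: Tm_def)

lemma lin_Tm: "i \<in> {1..K} \<Longrightarrow> j \<in> {1..K} \<Longrightarrow> lin (Tm i j q)"
proof (cases "q = 0")
  case True thus ?thesis by (cases "i = j") (simp_all add: Tm_def tt_def[abs_def] lin_id lin_0)
next
  case False
  assume "i \<in> {1..K}" "j \<in> {1..K}"
  moreover have "Tm i j q = t i j q" using False by (simp add: Tm_def tt_def[abs_def])
  ultimately show ?thesis using False lin_t by simp
qed

lemma tt_lin_zero: "i \<in> {1..K} \<Longrightarrow> j \<in> {1..K} \<Longrightarrow> tt t i j q 0 = 0"
  using lin_zero[OF lin_Tm] by (simp add: Tm_def)

lemma t_zero: "i \<in> {1..K} \<Longrightarrow> j \<in> {1..K} \<Longrightarrow> 0 < r \<Longrightarrow> t i j r 0 = 0"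
  using lin_zero[OF lin_t[of i j r]] by simp

definition Aop where
  "Aop i j k l r q x = tt t i j r (tt t k l q x)
     - scale (sg ((par s i + par s j) * (par s k + par s l))) (tt t k l q (tt t i j r x))"

definition Hop where
  "Hop i j k l e f x = tt t k j e (tt t i l f x) - tt t k j f (tt t i l e x)"

abbreviation "sgm i j k \<equiv> sg (par s i * par s j + par s i * par s k + par s j * par s k)"

lemma A_0q: "i \<in> {1..K} \<Longrightarrow> j \<in> {1..K} \<Longrightarrow> k \<in> {1..K} \<Longrightarrow> l \<in> {1..K} \<Longrightarrow> Aop i j k l 0 q x = 0"
  by (cases "i = j") (simp_all add: Aop_def tt_def sg_def t_zero)

lemma A_r0: "i \<in> {1..K} \<Longrightarrow> j \<in> {1..K} \<Longrightarrow> k \<in> {1..K} \<Longrightarrow> l \<in> {1..K} \<Longrightarrow> Aop i j k l r 0 x = 0"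
  by (cases "k = l") (simp_all add: Aop_def tt_def sg_def t_zero)

lemma rel_coef:
  assumes "i \<in> {1..K}" "j \<in> {1..K}" "k \<in> {1..K}" "l \<in> {1..K}" "1 \<le> r" "1 \<le> q"
  shows "Aop i j k l r q x = scale (sgm i j k) (\<Sum>e<min r q. Hop i j k l e (r + q - 1 - e) x)"
proof -
  have "tt t i j r = t i j r" "tt t k l q = t k l q" using assms by (auto simp: tt_def[abs_def])
  thus ?thesis using rel[OF assms, of x] by (simp add: Aop_def Hop_def sgnv_scale)
qed

lemma rel_AB:
  assumes ij: "i \<in> {1..K}" "j \<in> {1..K}" "k \<in> {1..K}" "l \<in> {1..K}"
  shows "Aop i j k l (Suc r) q x - Aop i j k l r (Suc q) x = scale (sgm i j k) (Hop i j k l r q x)"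
proof (cases "q = 0")
  case True
  show ?thesis
  proof (cases "r = 0")
    case True
    thus ?thesis using \<open>q = 0\<close> by (simp add: A_r0[OF ij] A_0q[OF ij] Hop_def)
  next
    case False
    have "Aop i j k l r (Suc 0) x = scale (sgm i j k) (Hop i j k l 0 r x)"
      using rel_coef[OF ij, of r "Suc 0" x] False by simp
    thus ?thesis using \<open>q = 0\<close> by (simp add: A_r0[OF ij] Hop_def scale_right_diff_distrib)
  qed
next
  case False
  show ?thesis
  proof (cases "r = 0")
    case True
    have "Aop i j k l (Suc 0) q x = scale (sgm i j k) (Hop i j k l 0 q x)"
      using rel_coef[OF ij, of "Suc 0" q x] False by simp
    thus ?thesis using True by (simp add: A_0q[OF ij])
  next
    case False
    have 1: "Aop i j k l (Suc r) q x = scale (sgm i j k) (\<Sum>e<min (Suc r) q. Hop i j k l e (r + q - e) x)"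
      using rel_coef[OF ij, of "Suc r" q x] \<open>q \<noteq> 0\<close> by simp
    have 2: "Aop i j k l r (Suc q) x = scale (sgm i j k) (\<Sum>e<min r (Suc q). Hop i j k l e (r + q - e) x)"
      using rel_coef[OF ij, of r "Suc q" x] False by simp
    have 3: "(\<Sum>e<min (Suc r) q. Hop i j k l e (r + q - e) x) - (\<Sum>e<min r (Suc q). Hop i j k l e (r + q - e) x)
        = Hop i j k l r q x"
      by (rule sum_min_diff[where h="\<lambda>e f. Hop i j k l e f x"]) (simp_all add: Hop_def)
    show ?thesis unfolding 1 2 3[symmetric] by (simp add: scale_right_diff_distrib)
  qed
qed

end

context yrep begin

abbreviation "eps i j k l \<equiv> sg ((par s i + par s j) * (par s k + par s l))"

lemma Grel:
  assumes ij: "i \<in> {1..K}" "j \<in> {1..K}" "k \<in> {1..K}" "l \<in> {1..K}"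
  shows "scale (- c) (act (Tm i j) (act (shop c (Tm k l)) z) N
            - scale (eps i j k l) (act (shop c (Tm k l)) (act (Tm i j) z) N))
       = scale (sgm i j k) (act (Tm k j) (act (shop c (Tm i l)) z) N - act (shop c (Tm k j)) (act (Tm i l) z) N)"
proof -
  let ?S = "\<lambda>F. (\<Sum>r\<le>N. \<Sum>q\<le>N. \<Sum>m\<le>N. scale (Cf c N r q m) (F r q m))"
  have e1: "act (Tm i j) (act (shop c (Tm k l)) z) N = ?S (\<lambda>r q m. tt t i j r (tt t k l q (z m)))"
    by (subst exp1[OF lin_Tm[OF ij(1) ij(2)]]) (simp add: Tm_apply)
  have e2: "act (shop c (Tm k l)) (act (Tm i j) z) N = ?S (\<lambda>r q m. tt t k l q (tt t i j r (z m)))"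
    by (subst exp2[OF lin_Tm[OF ij(3) ij(4)]]) (simp add: Tm_apply)
  have e3: "act (Tm k j) (act (shop c (Tm i l)) z) N = ?S (\<lambda>r q m. tt t k j r (tt t i l q (z m)))"
    by (subst exp1[OF lin_Tm[OF ij(3) ij(2)]]) (simp add: Tm_apply)
  have e4: "act (shop c (Tm k j)) (act (Tm i l) z) N = ?S (\<lambda>r q m. tt t k j q (tt t i l r (z m)))"
    by (subst exp2[OF lin_Tm[OF ij(3) ij(2)]]) (simp add: Tm_apply)
  have L: "act (Tm i j) (act (shop c (Tm k l)) z) N
            - scale (eps i j k l) (act (shop c (Tm k l)) (act (Tm i j) z) N) = ?S (\<lambda>r q m. Aop i j k l r q (z m))"
    unfolding e1 e2 Aop_def
    by (simp add: scale_sum_right sum_subtractf[symmetric] scale_right_diff_distrib scale_left_commute mult.commute)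
  have R: "scale (sgm i j k) (act (Tm k j) (act (shop c (Tm i l)) z) N - act (shop c (Tm k j)) (act (Tm i l) z) N)
      = ?S (\<lambda>r q m. Aop i j k l (Suc r) q (z m) - Aop i j k l r (Suc q) (z m))"
    unfolding e3 e4 rel_AB[OF ij] Hop_def
    by (simp add: scale_sum_right sum_subtractf[symmetric] scale_right_diff_distrib scale_left_commute mult.commute)
  have "?S (\<lambda>r q m. Aop i j k l (Suc r) q (z m) - Aop i j k l r (Suc q) (z m)) = scale (- c) (?S (\<lambda>r q m. Aop i j k l r q (z m)))"
    by (rule shift_sum) (simp_all add: A_0q[OF ij] A_r0[OF ij])
  thus ?thesis using L R by simp
qed

end

lemma sum_split0: fixes N :: nat shows "(\<Sum>q\<le>N. f q) = f 0 + (\<Sum>q\<in>{1..N}. f q)"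
proof -
  have "{..N} = insert 0 {1..N}" by auto
  thus ?thesis by simp
qed

locale yhw = yrep scale K s t for scale :: "complex \<Rightarrow> 'v::ab_group_add \<Rightarrow> 'v" and K s t +
  fixes xi :: 'v and lam :: "nat \<Rightarrow> complex fps"
  assumes hw_up: "\<lbrakk>i \<in> {1..K}; j \<in> {1..K}; i < j; 1 \<le> r\<rbrakk> \<Longrightarrow> t i j r xi = 0"
    and hw_diag: "\<lbrakk>i \<in> {1..K}; 1 \<le> r\<rbrakk> \<Longrightarrow> t i i r xi = scale (lam i $ r) xi"
    and lam0: "i \<in> {1..K} \<Longrightarrow> lam i $ 0 = 1"
begin

definition solves :: "nat \<Rightarrow> nat \<Rightarrow> (nat \<Rightarrow> nat \<Rightarrow> 'v) \<Rightarrow> bool" where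
  "solves p i y \<longleftrightarrow> (\<forall>a\<in>{1..p}. \<forall>N. (\<Sum>b\<in>{1..p}. act (Tm a b) (y b) N) = cst (if a = i then xi else 0) N)"

lemma act_split:
  "act (Tm a b) y N = tt t a b 0 (y N) + (\<Sum>q\<in>{1..N}. t a b q (y (N - q)))"
proof -
  have "act (Tm a b) y N = tt t a b 0 (y N) + (\<Sum>q\<in>{1..N}. tt t a b q (y (N - q)))"
    unfolding act_def Tm_def by (subst sum_split0) simp
  also have "(\<Sum>q\<in>{1..N}. tt t a b q (y (N - q))) = (\<Sum>q\<in>{1..N}. t a b q (y (N - q)))"
    by (intro sum.cong refl) (simp add: tt_def)
  finally show ?thesis .
qed

lemma sum_act_split:
  assumes a: "a \<in> {1..p}"
  shows "(\<Sum>b\<in>{1..p}. act (Tm a b) (y b) N) = y a N + (\<Sum>b\<in>{1..p}. \<Sum>q\<in>{1..N}. t a b q (y b (N - q)))"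
proof -
  have "(\<Sum>b\<in>{1..p}. tt t a b 0 (y b N)) = y a N"
    using a by (simp add: tt_def)
  thus ?thesis by (simp add: act_split sum.distrib)
qed

lemma solves_unique:
  assumes y1: "solves p i y1" and y2: "solves p i y2"
  shows "a \<in> {1..p} \<Longrightarrow> y1 a N = y2 a N"
proof (induction N arbitrary: a rule: less_induct)
  case (less N)
  have eq: "(\<Sum>b\<in>{1..p}. \<Sum>q\<in>{1..N}. t a b q (y1 b (N - q))) = (\<Sum>b\<in>{1..p}. \<Sum>q\<in>{1..N}. t a b q (y2 b (N - q)))"
    by (intro sum.cong refl) (simp add: less.IH)
  have h1: "y1 a N + (\<Sum>b\<in>{1..p}. \<Sum>q\<in>{1..N}. t a b q (y1 b (N - q))) = cst (if a = i then xi else 0) N"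
    using y1 less.prems sum_act_split[OF less.prems, of y1 N] unfolding solves_def by simp
  have h2: "y2 a N + (\<Sum>b\<in>{1..p}. \<Sum>q\<in>{1..N}. t a b q (y2 b (N - q))) = cst (if a = i then xi else 0) N"
    using y2 less.prems sum_act_split[OF less.prems, of y2 N] unfolding solves_def by simp
  have "y1 a N + (\<Sum>b\<in>{1..p}. \<Sum>q\<in>{1..N}. t a b q (y1 b (N - q))) = y2 a N + (\<Sum>b\<in>{1..p}. \<Sum>q\<in>{1..N}. t a b q (y2 b (N - q)))"
    using h1 h2 by simp
  thus ?case using eq by simp
qed

lemma tinv_solves: "solves p i (\<lambda>b N. tinv p t b i N xi)"
  unfolding solves_def
proof (intro ballI allI)
  fix a N assume a: "a \<in> {1..p}"
  let ?Y = "\<lambda>b N. tinv p t b i N xi"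
  have sa: "(\<Sum>b\<in>{1..p}. act (Tm a b) (?Y b) N) = ?Y a N + (\<Sum>b\<in>{1..p}. \<Sum>q\<in>{1..N}. t a b q (?Y b (N - q)))"
    by (rule sum_act_split[OF a])
  show "(\<Sum>b\<in>{1..p}. act (Tm a b) (?Y b) N) = cst (if a = i then xi else 0) N"
  proof (cases N)
    case 0
    thus ?thesis unfolding sa by (simp add: cst_def)
  next
    case (Suc r)
    have "?Y a N = - (\<Sum>j\<in>{1..p}. \<Sum>q\<in>{1..N}. t a j q (?Y j (N - q)))"
      unfolding Suc by (simp only: tinv.simps)
    thus ?thesis unfolding sa using Suc by (simp add: cst_def)
  qed
qed

end

context yhw begin

definition inU :: "nat \<Rightarrow> nat \<Rightarrow> 'v \<Rightarrow> bool" where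
  "inU p n x \<longleftrightarrow> (\<forall>a\<in>{1..p}. \<forall>r\<ge>1. t a n r x = 0)"

context
  fixes p n assumes pn: "p < n" and nK: "n \<in> {1..K}"
begin

lemma aK: "a \<in> {1..p} \<Longrightarrow> a \<in> {1..K}" using pn nK by auto

lemma U_zero: "inU p n 0"
  unfolding inU_def
proof (intro ballI allI impI)
  fix a and r :: nat assume "a \<in> {1..p}" "1 \<le> r"
  thus "t a n r 0 = 0" by (intro t_zero aK nK) auto
qed

lemma U_add: "inU p n x \<Longrightarrow> inU p n y \<Longrightarrow> inU p n (x + y)"
  unfolding inU_def
proof (intro ballI allI impI)
  fix a and r :: nat assume h: "\<forall>a\<in>{1..p}. \<forall>r\<ge>1. t a n r x = 0" "\<forall>a\<in>{1..p}. \<forall>r\<ge>1. t a n r y = 0"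
    and a: "a \<in> {1..p}" and r: "1 \<le> r"
  thus "t a n r (x + y) = 0" using lin_add[OF lin_t[OF aK[OF a] nK r]] by simp
qed

lemma U_neg: "inU p n x \<Longrightarrow> inU p n (- x)"
  unfolding inU_def
proof (intro ballI allI impI)
  fix a and r :: nat assume h: "\<forall>a\<in>{1..p}. \<forall>r\<ge>1. t a n r x = 0"
    and a: "a \<in> {1..p}" and r: "1 \<le> r"
  thus "t a n r (- x) = 0" using lin_neg[OF lin_t[OF aK[OF a] nK r]] by simp
qed

lemma U_scale: "inU p n x \<Longrightarrow> inU p n (scale c x)"
  unfolding inU_def
proof (intro ballI allI impI)
  fix a and r :: nat assume h: "\<forall>a\<in>{1..p}. \<forall>r\<ge>1. t a n r x = 0"
    and a: "a \<in> {1..p}" and r: "1 \<le> r"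
  thus "t a n r (scale c x) = 0" using lin_scale[OF lin_t[OF aK[OF a] nK r]] by simp
qed

lemma U_sum: "(\<And>b. b \<in> B \<Longrightarrow> inU p n (f b)) \<Longrightarrow> inU p n (\<Sum>b\<in>B. f b)"
proof (induct B rule: infinite_finite_induct)
  case (infinite A) thus ?case by (simp add: U_zero)
next
  case empty thus ?case by (simp add: U_zero)
next
  case (insert x F) thus ?case by (simp add: U_add)
qed

lemma U_xi: "inU p n xi"
  unfolding inU_def
proof (intro ballI allI impI)
  fix a and r :: nat assume a: "a \<in> {1..p}" and r: "1 \<le> r"
  show "t a n r xi = 0" by (rule hw_up[OF aK[OF a] nK _ r]) (use a pn in auto)
qed

lemma tt_cn: "c \<in> {1..p} \<Longrightarrow> inU p n x \<Longrightarrow> tt t c n w x = 0"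
  unfolding inU_def tt_def using pn by auto

lemma U_t:
  assumes c: "c \<in> {1..p}" and d: "d \<in> {1..p}" and q: "1 \<le> q" and x: "inU p n x"
  shows "inU p n (t c d q x)"
  unfolding inU_def
proof (intro ballI allI impI)
  fix a and r :: nat assume a: "a \<in> {1..p}" and r: "1 \<le> r"
  have R: "t c d q (t a n r x)
          - sgnv ((par s c + par s d) * (par s a + par s n)) (t a n r (t c d q x))
        = sgnv (par s c * par s d + par s c * par s a + par s d * par s a)
            (\<Sum>e<min q r. tt t a d e (tt t c n (q + r - 1 - e) x)
                          - tt t a d (q + r - 1 - e) (tt t c n e x))"
    by (rule rel) (use aK[OF c] aK[OF d] aK[OF a] nK q r in auto)
  have "t a n r x = 0" using x a r unfolding inU_def by auto
  moreover have "t c d q 0 = 0" using q by (intro t_zero aK c d) auto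
  moreover have "tt t a d e 0 = 0" for e by (rule tt_lin_zero) (use aK[OF a] aK[OF d] in auto)
  ultimately have "sgnv ((par s c + par s d) * (par s a + par s n)) (t a n r (t c d q x)) = 0"
    using R by (simp add: tt_cn[OF c x] sgnv_scale)
  thus "t a n r (t c d q x) = 0" by (simp add: sgnv_scale sg_def split: if_splits)
qed

lemma U_tinv: "b \<in> {1..p} \<Longrightarrow> inU p n (tinv p t b i N xi)"
proof (induction N arbitrary: b rule: less_induct)
  case (less N)
  show ?case
  proof (cases N)
    case 0 thus ?thesis by (simp add: U_xi U_zero)
  next
    case (Suc r)
    have "tinv p t b i N xi = - (\<Sum>j\<in>{1..p}. \<Sum>q\<in>{1..N}. t b j q (tinv p t j i (N - q) xi))"
      unfolding Suc by (simp only: tinv.simps)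
    moreover have "inU p n (- (\<Sum>j\<in>{1..p}. \<Sum>q\<in>{1..N}. t b j q (tinv p t j i (N - q) xi)))"
      using Suc less by (intro U_neg U_sum U_t) auto
    ultimately show ?thesis by simp
  qed
qed

lemma U_vshift: "(\<And>N. inU p n (y N)) \<Longrightarrow> inU p n (vshift c y N)"
  unfolding vshift_def by (intro U_sum U_scale) auto

lemma van1: "a \<in> {1..p} \<Longrightarrow> (\<And>N. inU p n (z N)) \<Longrightarrow> act (Tm a n) z N = 0"
  unfolding act_def Tm_apply by (intro sum.neutral ballI) (simp add: tt_cn)

lemma van2: "a \<in> {1..p} \<Longrightarrow> (\<And>N. inU p n (z N)) \<Longrightarrow> act (shop c (Tm a n)) z N = 0"
  unfolding act_def shop_def Tm_apply by (intro sum.neutral ballI) (simp add: tt_cn)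

end

end

context yrep begin

lemma sg_par: "n \<in> {1..K} \<Longrightarrow> sg (par s n) = of_int (s n)"
  using spm[of n] by (auto simp: sg_def par_def)

lemma sg_nz: "n \<in> {1..K} \<Longrightarrow> (of_int (s n) :: complex) \<noteq> 0"
  using spm[of n] by auto

lemma eps_1: "sg ((x + y) * (z + z)) = 1" by (simp add: sg_def)
lemma eps_2: "sg ((z + z) * (x + y)) = 1" by (simp add: sg_def)

lemma sgm_ann: "sg (x * z + x * z + z * z) = sg z" by (simp add: sg_def)
lemma sgm_nbn: "sg (z * x + z * z + x * z) = sg z" by (simp add: sg_def mult.commute)
lemma sgm_nnn: "sg (z * z + z * z + z * z) = sg z" by (simp add: sg_def)

lemma RowA:
  assumes a: "a \<in> {1..K}" and b: "b \<in> {1..K}" and n: "n \<in> {1..K}"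
    and c: "c = of_int (s n)"
    and V1: "\<And>N. act (shop c (Tm a n)) z N = 0" and V2: "\<And>N. act (Tm a n) z N = 0"
  shows "act (Tm a b) (act (shop c (Tm n n)) z) N - act (Tm a n) (act (shop c (Tm n b)) z) N
       = act (Tm n n) (act (shop c (Tm a b)) z) N"
proof -
  have c0: "c \<noteq> 0" using sg_nz[OF n] c by simp
  have z1: "act (Tm n b) (act (shop c (Tm a n)) z) N = 0"
    by (subst act_cong[of _ "\<lambda>N. 0"]) (simp_all add: V1 act_zero[OF lin_Tm[OF n b]])
  have z2: "act (shop c (Tm n b)) (act (Tm a n) z) N = 0"
    by (subst act_cong[of _ "\<lambda>N. 0"]) (simp_all add: V2 act_zero[OF lin_shop[OF lin_Tm[OF n b]]])
  note E1 = Grel[OF a b n n, of c z N]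
  note E3 = Grel[OF a n n b, of c z N]
  have P12: "act (Tm a b) (act (shop c (Tm n n)) z) N = act (shop c (Tm n n)) (act (Tm a b) z) N"
    using E1 c0 by (simp add: z1 z2 eps_1)
  have "scale (- c) (act (Tm a n) (act (shop c (Tm n b)) z) N)
      = scale c (act (Tm n n) (act (shop c (Tm a b)) z) N - act (shop c (Tm n n)) (act (Tm a b) z) N)"
    using E3 by (simp add: z2 sgm_ann sg_par[OF n] c[symmetric])
  hence "- act (Tm a n) (act (shop c (Tm n b)) z) N
      = act (Tm n n) (act (shop c (Tm a b)) z) N - act (shop c (Tm n n)) (act (Tm a b) z) N"
    using c0 by (simp flip: scale_minus_right)
  thus ?thesis using P12 by (simp add: algebra_simps)
qed

lemma RowN:
  assumes b: "b \<in> {1..K}" and n: "n \<in> {1..K}" and c: "c = of_int (s n)"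
  shows "act (Tm n b) (act (shop c (Tm n n)) z) N = act (Tm n n) (act (shop c (Tm n b)) z) N"
proof -
  have c0: "c \<noteq> 0" using sg_nz[OF n] c by simp
  let ?Q1 = "act (Tm n b) (act (shop c (Tm n n)) z) N"
  let ?Q2 = "act (shop c (Tm n n)) (act (Tm n b) z) N"
  let ?Q3 = "act (shop c (Tm n b)) (act (Tm n n) z) N"
  let ?Q4 = "act (Tm n n) (act (shop c (Tm n b)) z) N"
  have F1: "scale (- c) (?Q1 - ?Q2) = scale c (?Q1 - ?Q3)"
    using Grel[OF n b n n, of c z N] by (simp add: eps_1 sgm_nbn sg_par[OF n] c[symmetric])
  have F2: "scale (- c) (?Q4 - ?Q3) = scale c (?Q4 - ?Q2)"
    using Grel[OF n n n b, of c z N] by (simp add: eps_2 sgm_nnn sg_par[OF n] c[symmetric])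
  have f1: "- (?Q1 - ?Q2) = ?Q1 - ?Q3"
    using F1 c0 by (simp flip: scale_minus_right)
  have f2: "- (?Q4 - ?Q3) = ?Q4 - ?Q2"
    using F2 c0 by (simp flip: scale_minus_right)
  have g1: "?Q1 + ?Q1 = ?Q2 + ?Q3"
  proof -
    have "?Q2 + ?Q3 = (?Q2 - ?Q1) + (?Q1 + ?Q3)" by simp
    also have "?Q2 - ?Q1 = ?Q1 - ?Q3" using f1 by simp
    finally show ?thesis by simp
  qed
  have g2: "?Q4 + ?Q4 = ?Q2 + ?Q3"
  proof -
    have "?Q2 + ?Q3 = (?Q3 - ?Q4) + (?Q4 + ?Q2)" by simp
    also have "?Q3 - ?Q4 = ?Q4 - ?Q2" using f2 by simp
    finally show ?thesis by simp
  qed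
  have "scale 2 ?Q1 = scale 2 ?Q4"
    using g1 g2 by (simp add: scale_left_distrib[of 1 1, simplified])
  thus ?thesis by simp
qed

end

lemma rho_Suc: "k \<le> Suc p \<Longrightarrow> rho (Suc p) s k = rho p s k + s (Suc p)"
  unfolding rho_def by simp

lemma rho_top: "rho p s (Suc p) = 0"
  unfolding rho_def by simp

context ys begin

lemma smul_add: "smul f (\<lambda>N. y1 N + y2 N) N = smul f y1 N + smul f y2 N"
  unfolding smul_def by (rule act_add) (rule lin_scl)
lemma smul_sum: "smul f (\<lambda>N. \<Sum>b\<in>B. y b N) N = (\<Sum>b\<in>B. smul f (y b) N)"
  unfolding smul_def by (rule act_sum) (rule lin_scl)
lemma smul_neg: "smul f (\<lambda>N. - y N) N = - smul f y N"
  unfolding smul_def by (rule act_neg) (rule lin_scl)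
lemma smul_diff: "smul f (\<lambda>N. y1 N - y2 N) N = smul f y1 N - smul f y2 N"
  unfolding smul_def by (rule act_diff) (rule lin_scl)

end

context yhw begin

lemma act_diag_cst: "n \<in> {1..K} \<Longrightarrow> act (Tm n n) (cst xi) N = smul (lam n) (cst xi) N"
proof -
  assume n: "n \<in> {1..K}"
  have "act (Tm n n) (cst xi) N = (\<Sum>q\<le>N. if q = N then tt t n n q xi else 0)"
    unfolding act_def Tm_apply cst_def
    by (intro sum.cong refl) (auto simp: tt_lin_zero[OF n n])
  also have "\<dots> = tt t n n N xi" by simp
  also have "\<dots> = scale (lam n $ N) xi"
    using hw_diag[OF n, of N] lam0[OF n] by (cases N) (auto simp: tt_def)
  finally show ?thesis by (simp add: smul_cst)
qed

lemma cst0: "cst 0 = (\<lambda>N. 0)" by (auto simp: cst_def)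

lemma step_vec:
  assumes i: "1 \<le> i" and ip: "i \<le> p" and nK: "Suc p \<le> K"
    and IH: "\<And>N. tinv p t i i N xi = scale (L $ N) xi"
  shows "tinv (Suc p) t i i N xi
     = scale ((inverse (lam (Suc p)) * (fps_shift_arg (of_int (s (Suc p))) L * fps_shift_arg (of_int (s (Suc p))) (lam (Suc p)))) $ N) xi"
proof -
  define n where "n = Suc p"
  define c where "c = (of_int (s n) :: complex)"
  define \<mu> where "\<mu> = inverse (lam n)"
  define y where "y b = (\<lambda>N. tinv p t b i N xi)" for b
  define z where "z b = vshift c (y b)" for b
  define y' where "y' b = (if b \<le> p then smul \<mu> (act (shop c (Tm n n)) (z b))
       else smul \<mu> (\<lambda>N. - (\<Sum>b'\<in>{1..p}. act (shop c (Tm n b')) (z b') N)))" for b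
  have n: "n \<in> {1..K}" using nK by (simp add: n_def)
  have pn: "p < n" by (simp add: n_def)
  have bK: "b \<in> {1..p} \<Longrightarrow> b \<in> {1..K}" for b using nK by auto
  have Uz: "b \<in> {1..p} \<Longrightarrow> inU p n (z b N)" for b N
    unfolding z_def y_def by (intro U_vshift[OF pn n] U_tinv[OF pn n])
  have solp: "solves p i y" unfolding y_def by (rule tinv_solves)
  have sol: "solves n i y'"
    unfolding solves_def
  proof (intro ballI allI)
    fix a N assume a: "a \<in> {1..n}"
    have aK: "a \<in> {1..K}" using a n by auto
    have split: "{1..n} = insert n {1..p}" by (auto simp: n_def)
    have "(\<Sum>b\<in>{1..n}. act (Tm a b) (y' b) N) = act (Tm a n) (y' n) N + (\<Sum>b\<in>{1..p}. act (Tm a b) (y' b) N)"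
      unfolding split by (subst sum.insert) (auto simp: n_def)
    also have "act (Tm a n) (y' n) N = smul \<mu> (\<lambda>N. - (\<Sum>b\<in>{1..p}. act (Tm a n) (act (shop c (Tm n b)) (z b)) N)) N"
    proof -
      have "act (Tm a n) (y' n) N = smul \<mu> (act (Tm a n) (\<lambda>N. - (\<Sum>b'\<in>{1..p}. act (shop c (Tm n b')) (z b') N))) N"
        unfolding y'_def using pn by (simp add: act_smul[OF lin_Tm[OF aK n]])
      also have "\<dots> = smul \<mu> (\<lambda>N. - (\<Sum>b\<in>{1..p}. act (Tm a n) (act (shop c (Tm n b)) (z b)) N)) N"
        by (rule smul_cong) (simp add: act_neg[OF lin_Tm[OF aK n]] act_sum[OF lin_Tm[OF aK n]])
      finally show ?thesis .
    qed
    also have "(\<Sum>b\<in>{1..p}. act (Tm a b) (y' b) N) = (\<Sum>b\<in>{1..p}. smul \<mu> (act (Tm a b) (act (shop c (Tm n n)) (z b))) N)"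
    proof (rule sum.cong[OF refl])
      fix b assume b: "b \<in> {1..p}"
      show "act (Tm a b) (y' b) N = smul \<mu> (act (Tm a b) (act (shop c (Tm n n)) (z b))) N"
        using b by (simp add: y'_def act_smul[OF lin_Tm[OF aK bK[OF b]]])
    qed
    also have "\<dots> = smul \<mu> (\<lambda>N. \<Sum>b\<in>{1..p}. act (Tm a b) (act (shop c (Tm n n)) (z b)) N) N"
      by (rule smul_sum[symmetric])
    finally have S: "(\<Sum>b\<in>{1..n}. act (Tm a b) (y' b) N) = smul \<mu> (\<lambda>N. (\<Sum>b\<in>{1..p}. act (Tm a b) (act (shop c (Tm n n)) (z b)) N)
          - (\<Sum>b\<in>{1..p}. act (Tm a n) (act (shop c (Tm n b)) (z b)) N)) N"
      by (simp add: smul_diff smul_neg)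
    show "(\<Sum>b\<in>{1..n}. act (Tm a b) (y' b) N) = cst (if a = i then xi else 0) N"
    proof (cases "a = n")
      case True
      have "(\<Sum>b\<in>{1..p}. act (Tm a b) (act (shop c (Tm n n)) (z b)) N') - (\<Sum>b\<in>{1..p}. act (Tm a n) (act (shop c (Tm n b)) (z b)) N') = 0" for N'
        unfolding True sum_subtractf[symmetric]
        by (intro sum.neutral ballI) (simp add: RowN[OF bK n c_def])
      hence "(\<Sum>b\<in>{1..n}. act (Tm a b) (y' b) N) = smul \<mu> (\<lambda>N. 0) N"
        unfolding S by (intro smul_cong) simp
      thus ?thesis using True ip pn by (simp add: smul_zero cst_def)
    next
      case False
      hence ap: "a \<in> {1..p}" using a by (auto simp: n_def)
      have "(\<Sum>b\<in>{1..p}. act (Tm a b) (act (shop c (Tm n n)) (z b)) N') - (\<Sum>b\<in>{1..p}. act (Tm a n) (act (shop c (Tm n b)) (z b)) N')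
          = act (Tm n n) (cst (if a = i then xi else 0)) N'" for N'
      proof -
        have "(\<Sum>b\<in>{1..p}. act (Tm a b) (act (shop c (Tm n n)) (z b)) N') - (\<Sum>b\<in>{1..p}. act (Tm a n) (act (shop c (Tm n b)) (z b)) N')
            = (\<Sum>b\<in>{1..p}. act (Tm n n) (act (shop c (Tm a b)) (z b)) N')"
          unfolding sum_subtractf[symmetric]
        proof (intro sum.cong refl)
          fix b assume b: "b \<in> {1..p}"
          show "act (Tm a b) (act (shop c (Tm n n)) (z b)) N' - act (Tm a n) (act (shop c (Tm n b)) (z b)) N' =
                act (Tm n n) (act (shop c (Tm a b)) (z b)) N'"
            by (rule RowA[OF aK bK[OF b] n c_def]) (simp_all add: van1[OF pn n ap] van2[OF pn n ap] Uz[OF b])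
        qed
        also have "\<dots> = act (Tm n n) (\<lambda>N. \<Sum>b\<in>{1..p}. act (shop c (Tm a b)) (z b) N) N'"
          by (rule act_sum[symmetric]) (rule lin_Tm[OF n n])
        also have "\<dots> = act (Tm n n) (cst (if a = i then xi else 0)) N'"
        proof (rule act_cong)
          fix M
          have "(\<Sum>b\<in>{1..p}. act (shop c (Tm a b)) (z b) M) = (\<Sum>b\<in>{1..p}. vshift c (act (Tm a b) (y b)) M)"
            unfolding z_def by (intro sum.cong refl) (simp add: vshift_act[OF lin_Tm[OF aK bK]])
          also have "\<dots> = vshift c (\<lambda>N. \<Sum>b\<in>{1..p}. act (Tm a b) (y b) N) M"
            by (rule vshift_sum[symmetric])
          also have "\<dots> = vshift c (cst (if a = i then xi else 0)) M"
            by (rule vshift_cong) (use solp ap in \<open>simp add: solves_def\<close>)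
          also have "\<dots> = cst (if a = i then xi else 0) M" by (rule vshift_cst)
          finally show "(\<Sum>b\<in>{1..p}. act (shop c (Tm a b)) (z b) M) = cst (if a = i then xi else 0) M" .
        qed
        finally show ?thesis .
      qed
      hence S2: "(\<Sum>b\<in>{1..n}. act (Tm a b) (y' b) N) = smul \<mu> (act (Tm n n) (cst (if a = i then xi else 0))) N"
        unfolding S by (intro smul_cong) simp
      show ?thesis
      proof (cases "a = i")
        case True
        have "smul \<mu> (act (Tm n n) (cst xi)) N = smul \<mu> (smul (lam n) (cst xi)) N"
          by (rule smul_cong) (rule act_diag_cst[OF n])
        also have "\<dots> = smul (\<mu> * lam n) (cst xi) N" by (rule smul_smul)
        also have "\<mu> * lam n = 1" unfolding \<mu>_def by (rule inverse_mult_eq_1) (simp add: lam0[OF n])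
        finally show ?thesis using S2 True by (simp add: smul_one)
      next
        case False
        have "smul \<mu> (act (Tm n n) (cst 0)) N = smul \<mu> (\<lambda>N. 0) N"
          by (rule smul_cong) (simp add: cst0 act_zero[OF lin_Tm[OF n n]])
        thus ?thesis using S2 False by (simp add: smul_zero cst_def)
      qed
    qed
  qed
  have "tinv n t i i N xi = y' i N"
    using solves_unique[OF tinv_solves sol, of i N] i ip by (simp add: n_def)
  also have "y' i N = smul \<mu> (act (shop c (Tm n n)) (z i)) N" using ip by (simp add: y'_def)
  also have "\<dots> = smul \<mu> (smul (fps_shift_arg c L) (smul (fps_shift_arg c (lam n)) (cst xi))) N"
  proof (rule smul_cong)
    fix M
    have zi: "z i M' = smul (fps_shift_arg c L) (cst xi) M'" for M'
    proof -
      have "z i M' = vshift c (smul L (cst xi)) M'"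
        unfolding z_def y_def by (rule vshift_cong) (simp add: IH smul_cst)
      also have "\<dots> = smul (fps_shift_arg c L) (vshift c (cst xi)) M'" by (rule vshift_smul)
      also have "\<dots> = smul (fps_shift_arg c L) (cst xi) M'" by (rule smul_cong) (rule vshift_cst)
      finally show ?thesis .
    qed
    have sc: "act (shop c (Tm n n)) (cst xi) M' = smul (fps_shift_arg c (lam n)) (cst xi) M'" for M'
    proof -
      have "act (shop c (Tm n n)) (cst xi) M' = act (shop c (Tm n n)) (vshift c (cst xi)) M'"
        by (rule act_cong) (simp add: vshift_cst)
      also have "\<dots> = vshift c (act (Tm n n) (cst xi)) M'"
        by (rule vshift_act[symmetric]) (rule lin_Tm[OF n n])
      also have "\<dots> = vshift c (smul (lam n) (cst xi)) M'"
        by (rule vshift_cong) (rule act_diag_cst[OF n])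
      also have "\<dots> = smul (fps_shift_arg c (lam n)) (vshift c (cst xi)) M'" by (rule vshift_smul)
      also have "\<dots> = smul (fps_shift_arg c (lam n)) (cst xi) M'" by (rule smul_cong) (rule vshift_cst)
      finally show ?thesis .
    qed
    have "act (shop c (Tm n n)) (z i) M = act (shop c (Tm n n)) (smul (fps_shift_arg c L) (cst xi)) M"
      by (rule act_cong) (rule zi)
    also have "\<dots> = smul (fps_shift_arg c L) (act (shop c (Tm n n)) (cst xi)) M"
      by (rule act_smul) (rule lin_shop[OF lin_Tm[OF n n]])
    also have "\<dots> = smul (fps_shift_arg c L) (smul (fps_shift_arg c (lam n)) (cst xi)) M"
      by (rule smul_cong) (rule sc)
    finally show "act (shop c (Tm n n)) (z i) M = smul (fps_shift_arg c L) (smul (fps_shift_arg c (lam n)) (cst xi)) M" .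
  qed
  also have "\<dots> = smul (\<mu> * (fps_shift_arg c L * fps_shift_arg c (lam n))) (cst xi) N"
    by (simp add: smul_smul[symmetric] smul_cong[OF smul_smul[symmetric]])
  also have "\<dots> = scale ((\<mu> * (fps_shift_arg c L * fps_shift_arg c (lam n))) $ N) xi"
    by (rule smul_cst)
  finally show ?thesis by (simp add: n_def c_def \<mu>_def)
qed

end

definition Lp :: "(nat \<Rightarrow> int) \<Rightarrow> (nat \<Rightarrow> complex fps) \<Rightarrow> nat \<Rightarrow> nat \<Rightarrow> complex fps" where
  "Lp s lam i p = inverse (fps_shift_arg (of_int (rho p s (i + 1))) (lam i)) *
              (\<Prod>k\<in>{i+1..p}.
                 fps_shift_arg (of_int (rho p s k)) (lam k) *
                 inverse (fps_shift_arg (of_int (rho p s (k + 1))) (lam k)))"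

lemma Lp_step:
  assumes ip: "i \<le> p" and l0: "\<And>k. k \<in> {i..Suc p} \<Longrightarrow> lam k $ 0 = 1"
  shows "Lp s lam i (Suc p) = inverse (lam (Suc p)) *
     (fps_shift_arg (of_int (s (Suc p))) (Lp s lam i p) * fps_shift_arg (of_int (s (Suc p))) (lam (Suc p)))"
proof -
  define c where "c = (of_int (s (Suc p)) :: complex)"
  define F where "F q k = fps_shift_arg (of_int (rho q s k)) (lam k) * inverse (fps_shift_arg (of_int (rho q s (k + 1))) (lam k))" for q k
  have rS: "k \<le> Suc p \<Longrightarrow> (of_int (rho (Suc p) s k) :: complex) = c + of_int (rho p s k)" for k
    by (simp add: rho_Suc c_def)
  have shF: "fps_shift_arg c (F p k) = F (Suc p) k" if k: "k \<in> {i+1..p}" for k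
  proof -
    have l: "lam k $ 0 = 1" using k by (intro l0) auto
    show ?thesis unfolding F_def
      using k by (simp add: sh_mult sh_inverse l sh_sh rS)
  qed
  have A: "fps_shift_arg c (inverse (fps_shift_arg (of_int (rho p s (i + 1))) (lam i)))
        = inverse (fps_shift_arg (of_int (rho (Suc p) s (i + 1))) (lam i))"
    using ip l0[of i] by (simp add: sh_inverse sh_sh rS)
  have P: "fps_shift_arg c (\<Prod>k\<in>{i+1..p}. F p k) = (\<Prod>k\<in>{i+1..p}. F (Suc p) k)"
    by (simp add: sh_prod shF)
  have top: "F (Suc p) (Suc p) = fps_shift_arg c (lam (Suc p)) * inverse (lam (Suc p))"
    unfolding F_def using rho_top[of "Suc p" s] rho_Suc[of "Suc p" p s] rho_top[of p s]
    by (simp add: sh0 c_def)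
  have "Lp s lam i (Suc p) = inverse (fps_shift_arg (of_int (rho (Suc p) s (i + 1))) (lam i)) *
       ((\<Prod>k\<in>{i+1..p}. F (Suc p) k) * F (Suc p) (Suc p))"
    unfolding Lp_def F_def[symmetric] using ip by simp
  also have "\<dots> = inverse (lam (Suc p)) * (fps_shift_arg c (Lp s lam i p) * fps_shift_arg c (lam (Suc p)))"
    unfolding Lp_def F_def[symmetric] top sh_mult A P by (simp add: ac_simps)
  finally show ?thesis by (simp add: c_def)
qed

context yhw begin

lemma base:
  assumes i: "i \<in> {1..K}"
  shows "tinv i t i i N xi = scale (inverse (lam i) $ N) xi"
proof -
  define \<mu> where "\<mu> = inverse (lam i)"
  define y0 where "y0 b = (if b = i then smul \<mu> (cst xi) else (\<lambda>N. 0))" for b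
  have sol: "solves i i y0"
    unfolding solves_def
  proof (intro ballI allI)
    fix a N assume a: "a \<in> {1..i}"
    have aK: "a \<in> {1..K}" using a i by auto
    have "(\<Sum>b\<in>{1..i}. act (Tm a b) (y0 b) N) = (\<Sum>b\<in>{1..i}. if b = i then act (Tm a i) (smul \<mu> (cst xi)) N else 0)"
    proof (rule sum.cong[OF refl])
      fix b assume b: "b \<in> {1..i}"
      hence bK: "b \<in> {1..K}" using i by auto
      show "act (Tm a b) (y0 b) N = (if b = i then act (Tm a i) (smul \<mu> (cst xi)) N else 0)"
        by (simp add: y0_def act_zero[OF lin_Tm[OF aK bK]])
    qed
    also have "\<dots> = act (Tm a i) (smul \<mu> (cst xi)) N" using i by simp
    also have "\<dots> = smul \<mu> (act (Tm a i) (cst xi)) N" by (rule act_smul) (rule lin_Tm[OF aK i])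
    finally have S: "(\<Sum>b\<in>{1..i}. act (Tm a b) (y0 b) N) = smul \<mu> (act (Tm a i) (cst xi)) N" .
    show "(\<Sum>b\<in>{1..i}. act (Tm a b) (y0 b) N) = cst (if a = i then xi else 0) N"
    proof (cases "a = i")
      case True
      have "smul \<mu> (act (Tm i i) (cst xi)) N = smul \<mu> (smul (lam i) (cst xi)) N"
        by (rule smul_cong) (rule act_diag_cst[OF i])
      also have "\<dots> = smul (\<mu> * lam i) (cst xi) N" by (rule smul_smul)
      also have "\<mu> * lam i = 1" unfolding \<mu>_def by (rule inverse_mult_eq_1) (simp add: lam0[OF i])
      finally show ?thesis using S True by (simp add: smul_one)
    next
      case False
      hence ai: "a < i" using a by auto
      have "act (Tm a i) (cst xi) M = 0" for M
        unfolding act_def Tm_apply cst_def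
      proof (intro sum.neutral ballI)
        fix q assume "q \<in> {..M}"
        show "tt t a i q (if M - q = 0 then xi else 0) = 0"
          using ai hw_up[OF aK i ai, of q] t_zero[OF aK i, of q] by (auto simp: tt_def)
      qed
      hence "smul \<mu> (act (Tm a i) (cst xi)) N = smul \<mu> (\<lambda>N. 0) N" by (intro smul_cong) simp
      thus ?thesis using S False by (simp add: smul_zero cst_def)
    qed
  qed
  have "tinv i t i i N xi = y0 i N"
    using solves_unique[OF tinv_solves sol, of i N] i by simp
  thus ?thesis by (simp add: y0_def smul_cst \<mu>_def)
qed

lemma main_ind:
  assumes i: "1 \<le> i" and d: "i + d \<le> K"
  shows "tinv (i + d) t i i N xi = scale (Lp s lam i (i + d) $ N) xi"
  using d
proof (induction d arbitrary: N)
  case 0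
  have "Lp s lam i i = inverse (lam i)"
    by (simp add: Lp_def rho_def sh0)
  thus ?case using base[of i N] 0 i by simp
next
  case (Suc d)
  have IH: "\<And>N. tinv (i + d) t i i N xi = scale (Lp s lam i (i + d) $ N) xi"
    using Suc by simp
  have "tinv (Suc (i + d)) t i i N xi
     = scale ((inverse (lam (Suc (i + d))) * (fps_shift_arg (of_int (s (Suc (i + d)))) (Lp s lam i (i + d))
          * fps_shift_arg (of_int (s (Suc (i + d)))) (lam (Suc (i + d))))) $ N) xi"
    by (rule step_vec[OF i _ _ IH]) (use Suc.prems in auto)
  also have "inverse (lam (Suc (i + d))) * (fps_shift_arg (of_int (s (Suc (i + d)))) (Lp s lam i (i + d))
          * fps_shift_arg (of_int (s (Suc (i + d)))) (lam (Suc (i + d)))) = Lp s lam i (Suc (i + d))"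
    by (rule Lp_step[symmetric]) (use Suc.prems i in \<open>auto intro!: lam0\<close>)
  finally show ?case by simp
qed

end

theorem proposition2p9:
  fixes m n :: nat and s :: "nat \<Rightarrow> int"
    and scale :: "complex \<Rightarrow> 'v::ab_group_add \<Rightarrow> 'v"
    and t :: "nat \<Rightarrow> nat \<Rightarrow> nat \<Rightarrow> 'v \<Rightarrow> 'v"
    and lam :: "nat \<Rightarrow> complex fps" and xi :: 'v
  assumes "parity_seq m n s"
    and "yangian_rep (m + n) s scale t"
    and "highest_weight_vector (m + n) scale t lam xi"
    and "i \<in> {1..m + n}"
  shows "\<forall>r. tinv (m + n) t i i r xi =
           scale (fps_nth
             (inverse (fps_shift_arg (of_int (rho (m + n) s (i + 1))) (lam i)) *
              (\<Prod>k\<in>{i+1..m + n}.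
                 fps_shift_arg (of_int (rho (m + n) s k)) (lam k) *
                 inverse (fps_shift_arg (of_int (rho (m + n) s (k + 1))) (lam k)))) r) xi"
proof -
  have VS: "vector_space scale" using assms(2) unfolding yangian_rep_def by simp
  have LT: "\<And>i j r. \<lbrakk>i \<in> {1..m+n}; j \<in> {1..m+n}; 1 \<le> r\<rbrakk> \<Longrightarrow> ys.lin scale (t i j r)"
  proof -
    fix i j and r :: nat assume h: "i \<in> {1..m+n}" "j \<in> {1..m+n}" "1 \<le> r"
    hence "Vector_Spaces.linear scale scale (t i j r)" using assms(2) unfolding yangian_rep_def by blast
    thus "ys.lin scale (t i j r)"
      unfolding ys.lin_def[OF ys.intro[OF VS]] Vector_Spaces.linear_iff by blast
  qed
  have REL: "\<And>i j k l r q v. \<lbrakk>i \<in> {1..m+n}; j \<in> {1..m+n}; k \<in> {1..m+n}; l \<in> {1..m+n}; 1 \<le> r; 1 \<le> q\<rbrakk> \<Longrightarrow>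
        t i j r (t k l q v)
          - sgnv ((par s i + par s j) * (par s k + par s l)) (t k l q (t i j r v))
        = sgnv (par s i * par s j + par s i * par s k + par s j * par s k)
            (\<Sum>a<min r q. tt t k j a (tt t i l (r + q - 1 - a) v)
                          - tt t k j (r + q - 1 - a) (tt t i l a v))"
    using assms(2) unfolding yangian_rep_def by blast
  have SPM: "\<And>i. i \<in> {1..m+n} \<Longrightarrow> s i = 1 \<or> s i = -1"
    using assms(1) unfolding parity_seq_def by blast
  have HU: "\<And>i j r. \<lbrakk>i \<in> {1..m+n}; j \<in> {1..m+n}; i < j; 1 \<le> r\<rbrakk> \<Longrightarrow> t i j r xi = 0"
    using assms(3) unfolding highest_weight_vector_def by blast
  have HD: "\<And>i r. \<lbrakk>i \<in> {1..m+n}; 1 \<le> r\<rbrakk> \<Longrightarrow> t i i r xi = scale (lam i $ r) xi"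
    using assms(3) unfolding highest_weight_vector_def by blast
  have L0: "\<And>i. i \<in> {1..m+n} \<Longrightarrow> lam i $ 0 = 1"
    using assms(3) unfolding highest_weight_vector_def by blast
  interpret yhw scale "m + n" s t xi lam
    by (rule yhw.intro[OF yrep.intro[OF ys.intro[OF VS] yrep_axioms.intro[where scale=scale and K="m+n" and s=s and t=t, OF LT REL SPM]]
          yhw_axioms.intro[where scale=scale and K="m+n" and t=t and xi=xi and lam=lam, OF HU HD L0]])
  show ?thesis
  proof
    fix r
    have i1: "1 \<le> i" and iK: "i + (m + n - i) \<le> m + n" using assms(4) by auto
    have "tinv (i + (m + n - i)) t i i r xi = scale (Lp s lam i (i + (m + n - i)) $ r) xi"
      by (rule main_ind[OF i1 iK])
    moreover have "i + (m + n - i) = m + n" using assms(4) by auto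
    ultimately show "tinv (m + n) t i i r xi =
           scale (fps_nth
             (inverse (fps_shift_arg (of_int (rho (m + n) s (i + 1))) (lam i)) *
              (\<Prod>k\<in>{i+1..m + n}.
                 fps_shift_arg (of_int (rho (m + n) s k)) (lam k) *
                 inverse (fps_shift_arg (of_int (rho (m + n) s (k + 1))) (lam k)))) r) xi"
      by (simp add: Lp_def)
  qed
qed


end
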